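(* In the setting below, the Markov chain on $(r_{\mathrm{hc}},\infty)^k$ with transition kernel \[P_{\beta,p}(\mathbf z,A)=\frac{1}{\lambda_0(\beta,p)\varphi_{0;\beta,p}(\mathbf z)}\int_AK_{\beta,p}(\mathbf z,\mathbf z')\varphi_{0;\beta,p}(\mathbf z')\mathrm d\mathbf z'\] is geometrically ergodic: with $\pi$ the probability measure with density proportional to $\varphi_{0;\beta,p}(\mathsf s(\mathbf z))\varphi_{0;\beta,p}(\mathbf z)$ (which is invariant for $P_{\beta,p}$), there exist $q\in(0,1)$ and finite constants $C(\mathbf z)$ such that $\|P^n_{\beta,p}(\mathbf z,\cdot)-\pi\|_{\mathsf{TV}}\le C(\mathbf z)q^n$ for all $\mathbf z\in(r_{\mathrm{hc}},\infty)^k$ and $n\in\mathbb{N}$.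
   Context: $v:\mathbb{R}_+\to\mathbb{R}\cup\{\infty\}$ measurable with hard core $r_{\mathrm{hc}}>0$ ($v\equiv\infty$ on $[0,r_{\mathrm{hc}}]$), finite range $R$ ($v\equiv0$ on $[R,\infty)$), finite and bounded from below on $[r_{\mathrm{hc}},R]$; $m\ge2$ an integer with $R<(m+1)r_{\mathrm{hc}}$, $k=m-1$; $\beta,p>0$. For $\mathbf z,\mathbf z'\in(r_{\mathrm{hc}},\infty)^k$: $V_p(\mathbf z)=\sum_{1\le i<j\le k+1}v(z_i+\dots+z_{j-1})+p\sum_iz_i$, $W(\mathbf z;\mathbf z')=\sum_{i=1}^k\sum_{j=1}^kv(z_i+\dots+z_k+z'_1+\dots+z'_j)$, $K_{\beta,p}(\mathbf z,\mathbf z')=\exp(-\beta(\frac12V_p(\mathbf z)+W(\mathbf z;\mathbf z')+\frac12V_p(\mathbf z')))$, and $\mathcal K_{\beta,p}$ the integral operator with kernel $K_{\beta,p}$ on $L^2((r_{\mathrm{hc}},\infty)^k)$. $\lambda_0(\beta,p)>0$ is its dominant (simple) eigenvalue and $\varphi_{0;\beta,p}$ a corresponding strictly positive normalised eigenfunction (given by the Krein–Rutman theorem). $\mathsf s(z_1,\dots,z_k)=(z_k,\dots,z_1)$. *)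

theory Defs
  imports "HOL-Probability.Probability"
begin

text \<open>Points of (r_hc,oo)^k are represented as extensional functions nat => real on
  the index set {..<k} (0-based: z 0, ..., z (k-1) correspond to z_1, ..., z_k).\<close>

definition Lmeas :: "nat \<Rightarrow> (nat \<Rightarrow> real) measure" where
  "Lmeas k = PiM {..<k} (\<lambda>_. lborel)"

definition hcdom :: "nat \<Rightarrow> real \<Rightarrow> (nat \<Rightarrow> real) set" where
  "hcdom k rhc = {z. z \<in> space (Lmeas k) \<and> (\<forall>i<k. rhc < z i)}"

definition srev :: "nat \<Rightarrow> (nat \<Rightarrow> real) \<Rightarrow> (nat \<Rightarrow> real)" where
  "srev k z = (\<lambda>i. if i < k then z (k - 1 - i) else undefined)"

text \<open>V_p(z) = sum_{1<=i<j<=k+1} v(z_i+...+z_{j-1}) + p sum_i z_i (0-based indices).\<close>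
definition Vp :: "(real \<Rightarrow> ereal) \<Rightarrow> real \<Rightarrow> nat \<Rightarrow> (nat \<Rightarrow> real) \<Rightarrow> ereal" where
  "Vp v p k z = (\<Sum>i\<in>{0..k}. \<Sum>j\<in>{i<..k}. v (\<Sum>l\<in>{i..<j}. z l)) + ereal (p * (\<Sum>i<k. z i))"

text \<open>W(z;z') = sum_{i=1}^k sum_{j=1}^k v(z_i+...+z_k+z'_1+...+z'_j) (0-based indices).\<close>
definition Wint :: "(real \<Rightarrow> ereal) \<Rightarrow> nat \<Rightarrow> (nat \<Rightarrow> real) \<Rightarrow> (nat \<Rightarrow> real) \<Rightarrow> ereal" where
  "Wint v k z z' = (\<Sum>i<k. \<Sum>j<k. v ((\<Sum>l\<in>{i..<k}. z l) + (\<Sum>l\<le>j. z' l)))"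

definition boltz :: "ereal \<Rightarrow> real" where
  "boltz e = (if e = \<infinity> then 0 else exp (- real_of_ereal e))"

definition Kker :: "(real \<Rightarrow> ereal) \<Rightarrow> real \<Rightarrow> real \<Rightarrow> nat \<Rightarrow> (nat \<Rightarrow> real) \<Rightarrow> (nat \<Rightarrow> real) \<Rightarrow> real" where
  "Kker v \<beta> p k z z' = boltz (ereal \<beta> * (Vp v p k z / 2 + Wint v k z z' + Vp v p k z' / 2))"

definition is_eigenvalue_K ::
  "(real \<Rightarrow> ereal) \<Rightarrow> real \<Rightarrow> real \<Rightarrow> nat \<Rightarrow> real \<Rightarrow> complex \<Rightarrow> bool" where
  "is_eigenvalue_K v \<beta> p k rhc \<mu> \<longleftrightarrow>
     (\<exists>\<psi> :: (nat \<Rightarrow> real) \<Rightarrow> complex.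
        \<psi> \<in> borel_measurable (Lmeas k) \<and>
        set_integrable (Lmeas k) (hcdom k rhc) (\<lambda>z. (cmod (\<psi> z))\<^sup>2) \<and>
        \<not> (AE z in Lmeas k. z \<in> hcdom k rhc \<longrightarrow> \<psi> z = 0) \<and>
        (AE z in Lmeas k. z \<in> hcdom k rhc \<longrightarrow>
           set_integrable (Lmeas k) (hcdom k rhc) (\<lambda>z'. complex_of_real (Kker v \<beta> p k z z') * \<psi> z') \<and>
           (LINT z':hcdom k rhc|Lmeas k. complex_of_real (Kker v \<beta> p k z z') * \<psi> z') = \<mu> * \<psi> z))"

definition Ptrans :: "(real \<Rightarrow> ereal) \<Rightarrow> real \<Rightarrow> real \<Rightarrow> nat \<Rightarrow> real \<Rightarrow> real
     \<Rightarrow> ((nat \<Rightarrow> real) \<Rightarrow> real) \<Rightarrow> (nat \<Rightarrow> real) \<Rightarrow> (nat \<Rightarrow> real) measure" where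
  "Ptrans v \<beta> p k rhc lam0 \<phi> z = density (Lmeas k)
     (\<lambda>z'. ennreal (indicator (hcdom k rhc) z' * Kker v \<beta> p k z z' * \<phi> z' / (lam0 * \<phi> z)))"

primrec kernel_pow :: "'a measure \<Rightarrow> ('a \<Rightarrow> 'a measure) \<Rightarrow> nat \<Rightarrow> 'a \<Rightarrow> 'a measure" where
  "kernel_pow M P 0 z = return M z"
| "kernel_pow M P (Suc n) z = bind (kernel_pow M P n z) P"

definition pi_meas :: "nat \<Rightarrow> real \<Rightarrow> ((nat \<Rightarrow> real) \<Rightarrow> real) \<Rightarrow> (nat \<Rightarrow> real) measure" where
  "pi_meas k rhc \<phi> = density (Lmeas k)
     (\<lambda>z. ennreal (indicator (hcdom k rhc) z * \<phi> (srev k z) * \<phi> z /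
        (LINT y:hcdom k rhc|Lmeas k. \<phi> (srev k y) * \<phi> y)))"

definition tv_dist :: "'a measure \<Rightarrow> 'a measure \<Rightarrow> real" where
  "tv_dist \<mu> \<nu> = (SUP A \<in> sets \<mu>. \<bar>measure \<mu> A - measure \<nu> A\<bar>)"

end

theory Submission
  imports Defs
begin



lemma bind_transfer:
  assumes sM: "sets M = sets N" and ne: "space M \<noteq> {}"
    and g: "g \<in> measurable N (subprob_algebra N)"
    and fs: "\<And>x. sets (f x) = sets N"
    and U: "U \<in> sets N"
    and fg: "\<And>x. x \<in> U \<Longrightarrow> f x = g x"
    and fout: "\<And>x. x \<in> space N \<Longrightarrow> x \<notin> U \<Longrightarrow> f x \<notin> space (subprob_algebra N)"
    and ae: "AE x in M. x \<in> U"
  shows "bind M f = bind M g"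
proof -
  have gM: "g \<in> measurable M (subprob_algebra N)" using g by (simp add: measurable_cong_sets[OF sM refl])
  have sp: "space M = space N" using sM sets_eq_imp_space_eq by blast
  let ?x = "SOME x. x \<in> space M"
  have xin: "?x \<in> space M" using ne by (simp add: some_in_eq)
  have e1: "subprob_algebra (f ?x) = subprob_algebra N" by (rule subprob_algebra_cong) (simp add: fs)
  have e2: "subprob_algebra (g ?x) = subprob_algebra N"
    by (rule subprob_algebra_cong) (use sets_kernel[OF g] xin sp in auto)
  have UM: "U \<in> sets M" using U sM by simp
  have "distr M (subprob_algebra N) f = distr M (subprob_algebra N) g"
    unfolding distr_def
  proof (rule measure_of_eq)
    show "sets (subprob_algebra N) \<subseteq> Pow (space (subprob_algebra N))"
      using sets.space_closed by blast
    fix a assume "a \<in> sigma_sets (space (subprob_algebra N)) (sets (subprob_algebra N))"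
    then have a: "a \<in> sets (subprob_algebra N)" by (simp add: sets.sigma_sets_eq)
    have aS: "a \<subseteq> space (subprob_algebra N)" using a sets.sets_into_space by blast
    have eq: "f -` a \<inter> space M = (g -` a \<inter> space M) \<inter> U"
      using sp by (auto; metis fg fout aS subsetD)
    have gm: "g -` a \<inter> space M \<in> sets M" using measurable_sets[OF gM a] .
    show "emeasure M (f -` a \<inter> space M) = emeasure M (g -` a \<inter> space M)"
      unfolding eq
      by (rule emeasure_eq_AE, rule AE_mp[OF ae]) (use gm UM in \<open>auto intro!: AE_I2\<close>)
  qed
  then show ?thesis unfolding bind_def using ne e1 e2 by simp
qed

locale doeblin =
  fixes N :: "'a measure" and S :: "'a set" and Q :: "'a \<Rightarrow> 'a measure"
    and \<nu> :: "'a measure" and \<epsilon> :: real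
  assumes S_sets[measurable]: "S \<in> sets N"
    and Q_meas[measurable]: "Q \<in> measurable N (subprob_algebra N)"
    and Q_prob: "\<And>y. y \<in> S \<Longrightarrow> prob_space (Q y)"
    and Q_S: "\<And>y. y \<in> S \<Longrightarrow> emeasure (Q y) (space N - S) = 0"
    and nu_prob: "prob_space \<nu>" and nu_sets: "sets \<nu> = sets N"
    and eps_pos: "0 < \<epsilon>" and eps_lt: "\<epsilon> < 1"
    and minor: "\<And>y A. y \<in> S \<Longrightarrow> A \<in> sets N \<Longrightarrow> ennreal \<epsilon> * emeasure \<nu> A \<le> emeasure (Q y) A"
begin

lemma S_space: "S \<subseteq> space N"
  using S_sets sets.sets_into_space by blast

lemma Q_sets: "x \<in> space N \<Longrightarrow> sets (Q x) = sets N"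
  using sets_kernel[OF Q_meas] by blast

lemma Q_space: "x \<in> space N \<Longrightarrow> space (Q x) = space N"
  using Q_sets sets_eq_imp_space_eq by blast

lemma AE_Q: assumes y: "y \<in> S" shows "AE z in Q y. z \<in> S"
proof (rule AE_I')
  show "space N - S \<in> null_sets (Q y)"
    using Q_S[OF y] Q_sets y S_space by (auto simp: null_sets_def)
  show "{x \<in> space (Q y). x \<notin> S} \<subseteq> space N - S"
    using Q_space y S_space by auto
qed

lemma K_meas: "(\<lambda>x. kernel_pow N Q n x) \<in> measurable N (subprob_algebra N)"
proof (induction n)
  case 0
  then show ?case by (simp add: return_measurable)
next
  case (Suc n)
  then show ?case by (simp add: measurable_bind2[OF Suc Q_meas])
qed

lemma K_sets: "x \<in> space N \<Longrightarrow> sets (kernel_pow N Q n x) = sets N"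
  using sets_kernel[OF K_meas] by blast

lemma K_props: "x \<in> S \<Longrightarrow> prob_space (kernel_pow N Q n x) \<and> (AE z in kernel_pow N Q n x. z \<in> S)"
proof (induction n)
  case 0
  have x: "x \<in> space N" using 0 S_space by auto
  have P: "Measurable.pred N (\<lambda>z. z \<in> S)" by measurable
  have e: "kernel_pow N Q 0 x = return N x" by simp
  show ?case unfolding e using 0 x by (simp add: prob_space_return AE_return[OF x P])
next
  case (Suc n)
  let ?M = "kernel_pow N Q n x"
  have x: "x \<in> space N" using Suc S_space by auto
  interpret M: prob_space ?M using Suc by auto
  have Qm: "Q \<in> measurable ?M (subprob_algebra N)"
    using Q_meas by (simp add: measurable_cong_sets[OF K_sets[OF x] refl])
  have ae: "AE y in ?M. y \<in> S" using Suc by auto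
  have "prob_space (?M \<bind> Q)"
    by (rule M.prob_space_bind[OF _ Qm]) (use ae Q_prob in auto)
  moreover have "AE z in ?M \<bind> Q. z \<in> S"
    by (subst AE_bind[OF Qm]) (use ae AE_Q in \<open>auto elim: AE_mp\<close>)
  moreover have e: "kernel_pow N Q (Suc n) x = ?M \<bind> Q" by simp
  ultimately show ?case unfolding e by simp
qed

lemma int_01:
  fixes f :: "'b \<Rightarrow> real"
  assumes "prob_space M" "f \<in> borel_measurable M" "\<And>z. z \<in> space M \<Longrightarrow> 0 \<le> f z \<and> f z \<le> 1"
  shows "0 \<le> (\<integral>z. f z \<partial>M) \<and> (\<integral>z. f z \<partial>M) \<le> 1"
proof -
  interpret P: prob_space M by fact
  have int: "integrable M f"
    by (rule P.integrable_const_bound[where B=1]) (use assms in auto)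
  have "(\<integral>z. f z \<partial>M) \<le> (\<integral>z. 1 \<partial>M)"
    by (rule integral_mono) (use assms int in auto)
  then show ?thesis using assms by (auto intro!: integral_nonneg simp: P.prob_space)
qed

lemma minor_int:
  fixes f :: "'a \<Rightarrow> real"
  assumes y: "y \<in> S" and f[measurable]: "f \<in> borel_measurable N"
    and f01: "\<And>z. z \<in> space N \<Longrightarrow> 0 \<le> f z \<and> f z \<le> 1"
  shows "\<epsilon> * (\<integral>z. f z \<partial>\<nu>) \<le> (\<integral>z. f z \<partial>Q y)"
proof -
  have yN: "y \<in> space N" using y S_space by auto
  interpret Qy: prob_space "Q y" using Q_prob y .
  interpret nu: prob_space \<nu> by (rule nu_prob)
  have fQ: "f \<in> borel_measurable (Q y)" using f by (simp add: measurable_cong_sets[OF Q_sets[OF yN] refl])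
  have fn: "f \<in> borel_measurable \<nu>" using f by (simp add: measurable_cong_sets[OF nu_sets refl])
  have sp: "space \<nu> = space N" using nu_sets sets_eq_imp_space_eq by blast
  have mA: "ennreal \<epsilon> * emeasure \<nu> A \<le> emeasure (Q y) A" for A
  proof (cases "A \<in> sets N")
    case True then show ?thesis using minor[OF y] by auto
  next
    case False then show ?thesis by (simp add: emeasure_notin_sets nu_sets)
  qed
  have le: "scale_measure (ennreal \<epsilon>) \<nu> \<le> Q y"
    unfolding le_measure_iff
    by (simp add: Q_sets[OF yN] Q_space[OF yN] nu_sets sp space_scale_measure sets_scale_measure le_fun_def mA)
  have "(\<integral>\<^sup>+z. ennreal (f z) \<partial>scale_measure (ennreal \<epsilon>) \<nu>) \<le> (\<integral>\<^sup>+z. ennreal (f z) \<partial>Q y)"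
    by (rule nn_integral_mono_measure[OF _ le]) (simp add: nu_sets Q_sets[OF yN])
  moreover have "(\<integral>\<^sup>+z. ennreal (f z) \<partial>scale_measure (ennreal \<epsilon>) \<nu>) = ennreal \<epsilon> * (\<integral>\<^sup>+z. ennreal (f z) \<partial>\<nu>)"
    by (rule nn_integral_scale_measure) (use fn in measurable)
  ultimately have 1: "ennreal \<epsilon> * (\<integral>\<^sup>+z. ennreal (f z) \<partial>\<nu>) \<le> (\<integral>\<^sup>+z. ennreal (f z) \<partial>Q y)"
    by simp
  have fin: "(\<integral>\<^sup>+z. ennreal (f z) \<partial>Q y) < top"
  proof -
    have "(\<integral>\<^sup>+z. ennreal (f z) \<partial>Q y) \<le> (\<integral>\<^sup>+z. 1 \<partial>Q y)"
      by (rule nn_integral_mono) (use f01 Q_space[OF yN] in auto)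
    also have "\<dots> = 1" by (simp add: Qy.emeasure_space_1)
    finally show ?thesis by (simp add: order_le_less_trans)
  qed
  have i1: "(\<integral>z. f z \<partial>\<nu>) = enn2real (\<integral>\<^sup>+z. ennreal (f z) \<partial>\<nu>)"
    by (rule integral_eq_nn_integral[OF fn]) (use f01 sp in \<open>auto intro!: AE_I2\<close>)
  have i2: "(\<integral>z. f z \<partial>Q y) = enn2real (\<integral>\<^sup>+z. ennreal (f z) \<partial>Q y)"
    by (rule integral_eq_nn_integral[OF fQ]) (use f01 Q_space[OF yN] in \<open>auto intro!: AE_I2\<close>)
  have "\<epsilon> * (\<integral>z. f z \<partial>\<nu>) = enn2real (ennreal \<epsilon> * (\<integral>\<^sup>+z. ennreal (f z) \<partial>\<nu>))"
    using eps_pos by (simp add: i1 enn2real_mult)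
  also have "\<dots> \<le> enn2real (\<integral>\<^sup>+z. ennreal (f z) \<partial>Q y)"
    by (rule enn2real_mono[OF 1 fin])
  also have "\<dots> = (\<integral>z. f z \<partial>Q y)"
    by (simp add: i2)
  finally show ?thesis .
qed


lemma int_bind_Q:
  fixes f :: "'a \<Rightarrow> real"
  assumes M: "finite_measure M" "sets M = sets N"
    and f[measurable]: "f \<in> borel_measurable N" and fb: "\<And>z. z \<in> space N \<Longrightarrow> \<bar>f z\<bar> \<le> 1"
  shows "(\<integral>z. f z \<partial>(M \<bind> Q)) = (\<integral>y. (\<integral>z. f z \<partial>Q y) \<partial>M)"
proof -
  have Qm: "Q \<in> measurable M (subprob_algebra N)"
    using Q_meas by (simp add: measurable_cong_sets[OF M(2) refl])
  have sM: "space M = space N" using M(2) sets_eq_imp_space_eq by blast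
  show ?thesis
  proof (rule integral_bind[OF f fb Qm M(1)])
    show "AE x in M. emeasure (Q x) (space (Q x)) \<le> ennreal 1"
      using subprob_space_kernel[OF Q_meas] sM
      by (auto intro!: AE_I2 subprob_space.subprob_emeasure_le_1)
  qed
qed

lemma h_meas:
  fixes f :: "'a \<Rightarrow> real"
  assumes f[measurable]: "f \<in> borel_measurable N"
  shows "(\<lambda>y. \<integral>z. f z \<partial>Q y) \<in> borel_measurable N"
  by (rule measurable_compose[OF Q_meas integral_measurable_subprob_algebra[OF f]])

lemma F_meas:
  fixes f :: "'a \<Rightarrow> real"
  assumes f[measurable]: "f \<in> borel_measurable N"
  shows "(\<lambda>y. \<integral>z. f z \<partial>kernel_pow N Q n y) \<in> borel_measurable N"
  by (rule measurable_compose[OF K_meas integral_measurable_subprob_algebra[OF f]])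

lemma osc:
  fixes f :: "'a \<Rightarrow> real"
  assumes "f \<in> borel_measurable N" "\<And>z. z \<in> space N \<Longrightarrow> 0 \<le> f z \<and> f z \<le> 1" "x \<in> S" "x' \<in> S"
  shows "\<bar>(\<integral>z. f z \<partial>kernel_pow N Q n x) - (\<integral>z. f z \<partial>kernel_pow N Q n x')\<bar> \<le> (1-\<epsilon>)^n"
  using assms
proof (induction n arbitrary: f x x')
  case 0
  then have xs: "x \<in> space N" "x' \<in> space N" using S_space by auto
  have a: "0 \<le> f x" "f x \<le> 1" "0 \<le> f x'" "f x' \<le> 1" using 0(2) xs by auto
  have "(\<integral>z. f z \<partial>kernel_pow N Q 0 x) = f x" "(\<integral>z. f z \<partial>kernel_pow N Q 0 x') = f x'"
    using xs 0(1) by (simp_all add: integral_return)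
  then show ?case using a by simp
next
  case (Suc n)
  note f = Suc.prems(1) and f01 = Suc.prems(2)
  define c where "c = (\<integral>z. f z \<partial>\<nu>)"
  define h where "h y = (\<integral>z. f z \<partial>Q y)" for y
  define g where "g y = (if y \<in> S then (h y - \<epsilon> * c)/(1-\<epsilon>) else 0)" for y
  have hm[measurable]: "h \<in> borel_measurable N" unfolding h_def by (rule h_meas[OF f])
  have gm[measurable]: "g \<in> borel_measurable N" unfolding g_def by measurable
  interpret nu: prob_space \<nu> by (rule nu_prob)
  have sp: "space \<nu> = space N" using nu_sets sets_eq_imp_space_eq by blast
  have fn: "f \<in> borel_measurable \<nu>" using f by (simp add: measurable_cong_sets[OF nu_sets refl])
  have g01: "0 \<le> g y \<and> g y \<le> 1" if y: "y \<in> space N" for y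
  proof (cases "y \<in> S")
    case True
    interpret Qy: prob_space "Q y" using Q_prob True .
    have fQ: "f \<in> borel_measurable (Q y)" using f by (simp add: measurable_cong_sets[OF Q_sets[OF y] refl])
    have intQ: "integrable (Q y) f"
      by (rule Qy.integrable_const_bound[where B=1]) (use f01 Q_space[OF y] fQ in \<open>auto intro!: AE_I2\<close>)
    have intn: "integrable \<nu> f"
      by (rule nu.integrable_const_bound[where B=1]) (use f01 sp fn in \<open>auto intro!: AE_I2\<close>)
    have a: "\<epsilon> * c \<le> h y" unfolding c_def h_def by (rule minor_int[OF True f f01])
    have "\<epsilon> * (\<integral>z. 1 - f z \<partial>\<nu>) \<le> (\<integral>z. 1 - f z \<partial>Q y)"
      by (rule minor_int[OF True]) (use f f01 in auto)
    then have b: "\<epsilon> * (1 - c) \<le> 1 - h y"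
      unfolding c_def h_def using intQ intn by (simp add: Qy.prob_space nu.prob_space)
    show ?thesis using a b eps_pos eps_lt True unfolding g_def
      by (auto simp: field_simps)
  next
    case False then show ?thesis unfolding g_def by simp
  qed
  have key: "(\<integral>z. f z \<partial>kernel_pow N Q (Suc n) x) = \<epsilon> * c + (1-\<epsilon>) * (\<integral>z. g z \<partial>kernel_pow N Q n x)"
    if x: "x \<in> S" for x
  proof -
    have xN: "x \<in> space N" using x S_space by auto
    let ?M = "kernel_pow N Q n x"
    interpret M: prob_space ?M using K_props[OF x] by auto
    have sM: "space ?M = space N" using K_sets[OF xN] sets_eq_imp_space_eq by blast
    have "(\<integral>z. f z \<partial>kernel_pow N Q (Suc n) x) = (\<integral>z. f z \<partial>(?M \<bind> Q))" by simp
    also have "\<dots> = (\<integral>y. h y \<partial>?M)" unfolding h_def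
      by (rule int_bind_Q[OF _ K_sets[OF xN] f]) (use f01 in \<open>auto simp: M.finite_measure_axioms\<close>)
    also have "\<dots> = (\<integral>y. \<epsilon> * c + (1-\<epsilon>) * g y \<partial>?M)"
    proof (rule integral_cong_AE)
      show "h \<in> borel_measurable ?M" using hm by (simp add: measurable_cong_sets[OF K_sets[OF xN] refl])
      show "(\<lambda>y. \<epsilon> * c + (1-\<epsilon>) * g y) \<in> borel_measurable ?M"
        using gm by (simp add: measurable_cong_sets[OF K_sets[OF xN] refl])
      show "AE y in ?M. h y = \<epsilon> * c + (1-\<epsilon>) * g y"
      proof -
        have "AE y in ?M. y \<in> S" using K_props[OF x] by blast
        then show ?thesis by (rule AE_mp) (use eps_lt in \<open>auto simp: g_def intro!: AE_I2\<close>)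
      qed
    qed
    also have "\<dots> = \<epsilon> * c + (1-\<epsilon>) * (\<integral>y. g y \<partial>?M)"
    proof -
      have gM: "g \<in> borel_measurable ?M" using gm by (simp add: measurable_cong_sets[OF K_sets[OF xN] refl])
      have ig: "integrable ?M g"
        by (rule M.integrable_const_bound[where B=1]) (use g01 sM gM in \<open>auto intro!: AE_I2\<close>)
      show ?thesis using ig by (simp add: M.prob_space)
    qed
    finally show ?thesis .
  qed
  have IH: "\<bar>(\<integral>z. g z \<partial>kernel_pow N Q n x) - (\<integral>z. g z \<partial>kernel_pow N Q n x')\<bar> \<le> (1-\<epsilon>)^n"
    by (rule Suc.IH[OF gm g01 Suc.prems(3,4)])
  have "\<bar>(\<integral>z. f z \<partial>kernel_pow N Q (Suc n) x) - (\<integral>z. f z \<partial>kernel_pow N Q (Suc n) x')\<bar>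
     = (1-\<epsilon>) * \<bar>(\<integral>z. g z \<partial>kernel_pow N Q n x) - (\<integral>z. g z \<partial>kernel_pow N Q n x')\<bar>"
    unfolding key[OF Suc.prems(3)] key[OF Suc.prems(4)]
    using eps_lt by (simp add: right_diff_distrib[symmetric] abs_mult)
  also have "\<dots> \<le> (1-\<epsilon>) * (1-\<epsilon>)^n"
    using IH eps_lt by (intro mult_left_mono) auto
  finally show ?case by simp
qed


lemma inv_int:
  fixes f :: "'a \<Rightarrow> real"
  assumes pi: "prob_space \<pi>" "sets \<pi> = sets N" "AE x in \<pi>. x \<in> S" "\<pi> \<bind> Q = \<pi>"
    and f: "f \<in> borel_measurable N" "\<And>z. z \<in> space N \<Longrightarrow> 0 \<le> f z \<and> f z \<le> 1"
  shows "(\<integral>x. f x \<partial>\<pi>) = (\<integral>x. (\<integral>z. f z \<partial>kernel_pow N Q n x) \<partial>\<pi>)"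
  using f
proof (induction n arbitrary: f)
  case 0
  have sp: "space \<pi> = space N" using pi(2) sets_eq_imp_space_eq by blast
  show ?case by (rule Bochner_Integration.integral_cong[OF refl]) (use sp 0 in \<open>auto simp: integral_return\<close>)
next
  case (Suc n)
  note f = Suc.prems(1) and f01 = Suc.prems(2)
  interpret P: prob_space \<pi> by (rule pi(1))
  have sp: "space \<pi> = space N" using pi(2) sets_eq_imp_space_eq by blast
  define h where "h y = (\<integral>z. f z \<partial>Q y)" for y
  define h' where "h' y = (if y \<in> S then h y else 0)" for y
  have hm[measurable]: "h \<in> borel_measurable N" unfolding h_def by (rule h_meas[OF f])
  have hm'[measurable]: "h' \<in> borel_measurable N" unfolding h'_def by measurable
  have h01: "0 \<le> h' y \<and> h' y \<le> 1" if y: "y \<in> space N" for y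
  proof (cases "y \<in> S")
    case True
    have fQ: "f \<in> borel_measurable (Q y)" using f by (simp add: measurable_cong_sets[OF Q_sets[OF y] refl])
    have "0 \<le> h y \<and> h y \<le> 1" unfolding h_def
      by (rule int_01[OF Q_prob[OF True] fQ]) (use f01 Q_space[OF y] in auto)
    then show ?thesis unfolding h'_def using True by simp
  next
    case False then show ?thesis unfolding h'_def by simp
  qed
  have fpi: "f \<in> borel_measurable \<pi>" using f by (simp add: measurable_cong_sets[OF pi(2) refl])
  have hpi: "h \<in> borel_measurable \<pi>" using hm by (simp add: measurable_cong_sets[OF pi(2) refl])
  have h'pi: "h' \<in> borel_measurable \<pi>" using hm' by (simp add: measurable_cong_sets[OF pi(2) refl])
  have "(\<integral>x. (\<integral>z. f z \<partial>kernel_pow N Q (Suc n) x) \<partial>\<pi>) = (\<integral>x. (\<integral>z. h' z \<partial>kernel_pow N Q n x) \<partial>\<pi>)"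
  proof (rule integral_cong_AE)
    show "(\<lambda>x. \<integral>z. f z \<partial>kernel_pow N Q (Suc n) x) \<in> borel_measurable \<pi>"
      using F_meas[OF f, of "Suc n"] by (simp add: measurable_cong_sets[OF pi(2) refl])
    show "(\<lambda>x. \<integral>z. h' z \<partial>kernel_pow N Q n x) \<in> borel_measurable \<pi>"
      using F_meas[OF hm', of n] by (simp add: measurable_cong_sets[OF pi(2) refl])
    show "AE x in \<pi>. (\<integral>z. f z \<partial>kernel_pow N Q (Suc n) x) = (\<integral>z. h' z \<partial>kernel_pow N Q n x)"
      using pi(3)
    proof (rule AE_mp, intro AE_I2 impI)
      fix x assume x: "x \<in> S"
      have xN: "x \<in> space N" using x S_space by auto
      let ?M = "kernel_pow N Q n x"
      interpret M: prob_space ?M using K_props[OF x] by auto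
      have "(\<integral>z. f z \<partial>kernel_pow N Q (Suc n) x) = (\<integral>z. f z \<partial>(?M \<bind> Q))" by simp
      also have "\<dots> = (\<integral>y. h y \<partial>?M)" unfolding h_def
        by (rule int_bind_Q[OF _ K_sets[OF xN] f]) (use f01 in \<open>auto simp: M.finite_measure_axioms\<close>)
      also have "\<dots> = (\<integral>y. h' y \<partial>?M)"
      proof (rule integral_cong_AE)
        show "h \<in> borel_measurable ?M" using hm by (simp add: measurable_cong_sets[OF K_sets[OF xN] refl])
        show "h' \<in> borel_measurable ?M" using hm' by (simp add: measurable_cong_sets[OF K_sets[OF xN] refl])
        have "AE y in ?M. y \<in> S" using K_props[OF x] by blast
        then show "AE y in ?M. h y = h' y" by (rule AE_mp) (auto simp: h'_def intro!: AE_I2)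
      qed
      finally show "(\<integral>z. f z \<partial>kernel_pow N Q (Suc n) x) = (\<integral>z. h' z \<partial>kernel_pow N Q n x)" .
    qed
  qed
  also have "\<dots> = (\<integral>x. h' x \<partial>\<pi>)" by (rule Suc.IH[OF hm' h01, symmetric])
  also have "\<dots> = (\<integral>x. h x \<partial>\<pi>)"
    by (rule integral_cong_AE[OF h'pi hpi], rule AE_mp[OF pi(3)]) (auto simp: h'_def intro!: AE_I2)
  also have "\<dots> = (\<integral>x. f x \<partial>(\<pi> \<bind> Q))" unfolding h_def
    by (rule int_bind_Q[OF _ pi(2) f, symmetric]) (use f01 in \<open>auto simp: P.finite_measure_axioms\<close>)
  also have "\<dots> = (\<integral>x. f x \<partial>\<pi>)" using pi(4) by simp
  finally show ?case by simp
qed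

lemma dist_bound:
  assumes pi: "prob_space \<pi>" "sets \<pi> = sets N" "AE x in \<pi>. x \<in> S" "\<pi> \<bind> Q = \<pi>"
    and x: "x \<in> S" and A: "A \<in> sets N"
  shows "\<bar>measure (kernel_pow N Q n x) A - measure \<pi> A\<bar> \<le> (1-\<epsilon>)^n"
proof -
  interpret P: prob_space \<pi> by (rule pi(1))
  have sp: "space \<pi> = space N" using pi(2) sets_eq_imp_space_eq by blast
  have AN: "A \<subseteq> space N" using A sets.sets_into_space by blast
  define f where "f = (indicator A :: 'a \<Rightarrow> real)"
  have fm[measurable]: "f \<in> borel_measurable N" unfolding f_def using A by measurable
  have f01: "\<And>z. z \<in> space N \<Longrightarrow> 0 \<le> f z \<and> f z \<le> 1" unfolding f_def by (auto simp: indicator_def)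
  define F where "F y = (\<integral>z. f z \<partial>kernel_pow N Q n y)" for y
  have Fm: "F \<in> borel_measurable \<pi>" unfolding F_def
    using F_meas[OF fm, of n] by (simp add: measurable_cong_sets[OF pi(2) refl])
  have F01: "0 \<le> F y \<and> F y \<le> 1" if "y \<in> S" for y
  proof -
    have yN: "y \<in> space N" using that S_space by auto
    have fK: "f \<in> borel_measurable (kernel_pow N Q n y)"
      using fm by (simp add: measurable_cong_sets[OF K_sets[OF yN] refl])
    show ?thesis unfolding F_def
      by (rule int_01) (use K_props[OF that] fK f01 sets_eq_imp_space_eq[OF K_sets[OF yN]] in auto)
  qed
  have Fi: "integrable \<pi> F"
  proof (rule P.integrable_const_bound[where B=1, OF _ Fm])
    show "AE x in \<pi>. norm (F x) \<le> 1" using pi(3) by (rule AE_mp) (use F01 in \<open>auto intro!: AE_I2\<close>)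
  qed
  have osc': "\<bar>F x - F y\<bar> \<le> (1-\<epsilon>)^n" if "y \<in> S" for y
    unfolding F_def by (rule osc[OF fm f01 x that])
  have e1: "measure (kernel_pow N Q n x) A = F x"
  proof -
    have xN: "x \<in> space N" using x S_space by auto
    have "space (kernel_pow N Q n x) = space N" using sets_eq_imp_space_eq[OF K_sets[OF xN]] .
    then show ?thesis unfolding F_def f_def using AN by (simp add: Int_absorb2)
  qed
  have e2: "measure \<pi> A = (\<integral>y. F y \<partial>\<pi>)"
  proof -
    have "measure \<pi> A = (\<integral>y. f y \<partial>\<pi>)" unfolding f_def using AN sp by (simp add: Int_absorb2)
    also have "\<dots> = (\<integral>y. F y \<partial>\<pi>)" unfolding F_def by (rule inv_int[OF pi fm f01])
    finally show ?thesis .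
  qed
  have lo: "(\<integral>y. F x - (1-\<epsilon>)^n \<partial>\<pi>) \<le> (\<integral>y. F y \<partial>\<pi>)"
  proof (rule integral_mono_AE[OF _ Fi])
    show "AE y in \<pi>. F x - (1 - \<epsilon>) ^ n \<le> F y" using pi(3) by (rule AE_mp) (auto intro!: AE_I2 dest: osc' simp: abs_le_iff)
  qed auto
  have hi: "(\<integral>y. F y \<partial>\<pi>) \<le> (\<integral>y. F x + (1-\<epsilon>)^n \<partial>\<pi>)"
  proof (rule integral_mono_AE[OF Fi])
    show "AE y in \<pi>. F y \<le> F x + (1 - \<epsilon>) ^ n" using pi(3) by (rule AE_mp) (auto intro!: AE_I2 dest: osc' simp: abs_le_iff)
  qed auto
  show ?thesis using lo hi unfolding e1 e2 by (simp add: P.prob_space abs_le_iff)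
qed

end


lemma boltz_meas[measurable]: "boltz \<in> borel_measurable borel"
  unfolding boltz_def by measurable

lemma sum_rev_seg:
  fixes g :: "nat \<Rightarrow> 'b::comm_monoid_add"
  assumes "b \<le> k"
  shows "(\<Sum>l\<in>{a..<b}. g (k - 1 - l)) = (\<Sum>l\<in>{k-b..<k-a}. g l)"
proof (rule sum.reindex_bij_witness[of _ "\<lambda>l. k - 1 - l" "\<lambda>l. k - 1 - l"])
qed (use assms in auto)

lemma Vp_srev: "Vp v p k (srev k z) = Vp v p k z"
proof -
  define F where "F a b = v (\<Sum>l\<in>{a..<b}. z l)" for a b
  have inner: "(\<Sum>l\<in>{i..<j}. srev k z l) = (\<Sum>l\<in>{k-j..<k-i}. z l)" if "j \<le> k" for i j
  proof -
    have "(\<Sum>l\<in>{i..<j}. srev k z l) = (\<Sum>l\<in>{i..<j}. z (k - 1 - l))"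
      using that by (intro sum.cong) (auto simp: srev_def)
    also have "\<dots> = (\<Sum>l\<in>{k-j..<k-i}. z l)" by (rule sum_rev_seg[OF that])
    finally show ?thesis .
  qed
  have A: "(\<Sum>i\<in>{0..k}. \<Sum>j\<in>{i<..k}. v (\<Sum>l\<in>{i..<j}. srev k z l))
      = (\<Sum>(i,j)\<in>Sigma {0..k} (\<lambda>i. {i<..k}). F (k-j) (k-i))"
    by (subst sum.Sigma[symmetric]) (auto simp: F_def inner intro!: sum.cong)
  have B: "(\<Sum>i\<in>{0..k}. \<Sum>j\<in>{i<..k}. v (\<Sum>l\<in>{i..<j}. z l))
      = (\<Sum>(i,j)\<in>Sigma {0..k} (\<lambda>i. {i<..k}). F i j)"
    by (subst sum.Sigma[symmetric]) (auto simp: F_def)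
  have C: "(\<Sum>(i,j)\<in>Sigma {0..k} (\<lambda>i. {i<..k}). F (k-j) (k-i)) = (\<Sum>(i,j)\<in>Sigma {0..k} (\<lambda>i. {i<..k}). F i j)"
    by (rule sum.reindex_bij_witness[of _ "\<lambda>(i,j). (k-j,k-i)" "\<lambda>(i,j). (k-j,k-i)"]) auto
  have D: "(\<Sum>i<k. srev k z i) = (\<Sum>i<k. z i)"
  proof -
    have "(\<Sum>i<k. srev k z i) = (\<Sum>i<k. z (k - Suc i))"
      by (intro sum.cong) (auto simp: srev_def)
    also have "\<dots> = (\<Sum>i<k. z i)" by (rule sum.nat_diff_reindex)
    finally show ?thesis .
  qed
  show ?thesis unfolding Vp_def A B C D ..
qed

lemma Wint_srev: "Wint v k (srev k z') (srev k z) = Wint v k z z'"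
proof -
  define G where "G a b = v ((\<Sum>l\<in>{a..<k}. z l) + (\<Sum>l\<le>b. z' l))" for a b
  have t: "v ((\<Sum>l\<in>{i..<k}. srev k z' l) + (\<Sum>l\<le>j. srev k z l)) = G (k - Suc j) (k - Suc i)"
    if "i < k" "j < k" for i j
  proof -
    have 1: "(\<Sum>l\<in>{i..<k}. srev k z' l) = (\<Sum>l\<le>k - Suc i. z' l)"
    proof -
      have "(\<Sum>l\<in>{i..<k}. srev k z' l) = (\<Sum>l\<in>{i..<k}. z' (k - 1 - l))"
        by (intro sum.cong) (auto simp: srev_def)
      also have "\<dots> = (\<Sum>l\<in>{k-k..<k-i}. z' l)" by (rule sum_rev_seg) simp
      also have "{k-k..<k-i} = {..k - Suc i}" using that by auto
      finally show ?thesis .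
    qed
    have 2: "(\<Sum>l\<le>j. srev k z l) = (\<Sum>l\<in>{k - Suc j..<k}. z l)"
    proof -
      have "(\<Sum>l\<le>j. srev k z l) = (\<Sum>l\<in>{0..<Suc j}. z (k - 1 - l))"
        using that by (intro sum.cong) (auto simp: srev_def)
      also have "\<dots> = (\<Sum>l\<in>{k - Suc j..<k - 0}. z l)" by (rule sum_rev_seg) (use that in simp)
      finally show ?thesis by simp
    qed
    show ?thesis unfolding 1 2 G_def by (simp add: add.commute)
  qed
  have "Wint v k (srev k z') (srev k z) = (\<Sum>i<k. \<Sum>j<k. G (k - Suc j) (k - Suc i))"
    unfolding Wint_def by (intro sum.cong refl) (simp add: t)
  also have "\<dots> = (\<Sum>j<k. \<Sum>i<k. G (k - Suc j) (k - Suc i))" by (rule sum.swap)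
  also have "\<dots> = (\<Sum>j<k. \<Sum>i<k. G (k - Suc j) i)"
  proof -
    have "(\<Sum>i<k. G (k - Suc j) (k - Suc i)) = (\<Sum>i<k. G (k - Suc j) i)" for j
      using sum.nat_diff_reindex[of "G (k - Suc j)" k] .
    then show ?thesis by simp
  qed
  also have "\<dots> = (\<Sum>j<k. \<Sum>i<k. G j i)"
    by (rule sum.nat_diff_reindex[where g = "\<lambda>j. \<Sum>i<k. G j i"])
  also have "\<dots> = Wint v k z z'" unfolding Wint_def G_def ..
  finally show ?thesis .
qed

lemma Kker_srev: "Kker v \<beta> p k (srev k z') (srev k z) = Kker v \<beta> p k z z'"
  unfolding Kker_def Vp_srev Wint_srev by (simp add: ac_simps)


lemma space_Lmeas: "space (Lmeas k) = PiE {..<k} (\<lambda>_. UNIV)"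
  by (simp add: Lmeas_def space_PiM)

lemma hcdom_eq: "hcdom k rhc = PiE {..<k} (\<lambda>_. {rhc<..})"
  unfolding hcdom_def space_Lmeas by (simp add: PiE_iff set_eq_iff) blast

lemma hcdom_sets[measurable]: "hcdom k rhc \<in> sets (Lmeas k)"
  unfolding hcdom_eq Lmeas_def by (rule sets_PiM_I_finite) auto

lemma srev_space: "z \<in> space (Lmeas k) \<Longrightarrow> srev k z \<in> space (Lmeas k)"
  unfolding space_Lmeas srev_def by (simp add: PiE_iff extensional_def)

lemma srev_srev: "z \<in> space (Lmeas k) \<Longrightarrow> srev k (srev k z) = z"
  unfolding space_Lmeas srev_def by (rule ext) (simp add: PiE_iff extensional_def)

lemma srev_hcdom: "z \<in> space (Lmeas k) \<Longrightarrow> srev k z \<in> hcdom k rhc \<longleftrightarrow> z \<in> hcdom k rhc"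
proof -
  assume z: "z \<in> space (Lmeas k)"
  have eq: "(\<forall>i<k. rhc < z (k - 1 - i)) \<longleftrightarrow> (\<forall>i<k. rhc < z i)"
  proof
    assume a: "\<forall>i<k. rhc < z (k - 1 - i)"
    show "\<forall>i<k. rhc < z i"
    proof (intro allI impI)
      fix i assume "i < k"
      then have "k - 1 - (k - 1 - i) = i" "k - 1 - i < k" by auto
      then show "rhc < z i" using a by metis
    qed
  next
    assume a: "\<forall>i<k. rhc < z i"
    then show "\<forall>i<k. rhc < z (k - 1 - i)" by simp
  qed
  have "(\<forall>i<k. rhc < srev k z i) \<longleftrightarrow> (\<forall>i<k. rhc < z (k - 1 - i))"
    by (simp add: srev_def)
  then show ?thesis using srev_space[OF z] z eq unfolding hcdom_def by simp
qed

lemma srev_meas[measurable]: "srev k \<in> measurable (Lmeas k) (Lmeas k)"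
proof -
  have "(\<lambda>\<omega> i. if i < k then \<omega> (k - 1 - i) else undefined) \<in> measurable (Lmeas k) (PiM {..<k} (\<lambda>_. lborel))"
  proof (rule measurable_PiM_single')
    fix i assume i: "i \<in> {..<k}"
    then have "(\<lambda>\<omega>. \<omega> (k - 1 - i)) \<in> measurable (Lmeas k) lborel"
      unfolding Lmeas_def by (intro measurable_component_singleton) auto
    then show "(\<lambda>\<omega>. if i < k then \<omega> (k - 1 - i) else undefined) \<in> measurable (Lmeas k) lborel"
      using i by simp
  next
    show "(\<lambda>\<omega> i. if i < k then \<omega> (k - 1 - i) else undefined) \<in> space (Lmeas k) \<rightarrow> (\<Pi>\<^sub>E i\<in>{..<k}. space lborel)"
      by (simp add: Pi_iff PiE_iff extensional_def)
  qed
  then show ?thesis unfolding srev_def by (simp add: Lmeas_def)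
qed

lemma srev_pre:
  "srev k -` PiE {..<k} A \<inter> space (Lmeas k) = PiE {..<k} (\<lambda>i. A (k - Suc i))"
proof (intro set_eqI iffI)
  fix x assume "x \<in> srev k -` PiE {..<k} A \<inter> space (Lmeas k)"
  then have x: "x \<in> extensional {..<k}" "\<And>i. i < k \<Longrightarrow> x (k - 1 - i) \<in> A i"
    by (simp_all add: srev_def PiE_iff space_Lmeas)
  have "x i \<in> A (k - Suc i)" if "i < k" for i
  proof -
    have "k - 1 - (k - Suc i) = i" "k - Suc i < k" using that by auto
    then show ?thesis using x(2)[of "k - Suc i"] by simp
  qed
  then show "x \<in> PiE {..<k} (\<lambda>i. A (k - Suc i))" using x(1) by (simp add: PiE_iff)
next
  fix x assume x: "x \<in> PiE {..<k} (\<lambda>i. A (k - Suc i))"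
  then have x1: "x \<in> extensional {..<k}" "\<And>i. i < k \<Longrightarrow> x i \<in> A (k - Suc i)"
    by (simp_all add: PiE_iff)
  have "x (k - 1 - i) \<in> A i" if "i < k" for i
  proof -
    have "k - Suc (k - 1 - i) = i" "k - 1 - i < k" using that by auto
    then show ?thesis using x1(2)[of "k - 1 - i"] by simp
  qed
  then have "srev k x \<in> PiE {..<k} A" by (simp add: srev_def PiE_iff extensional_def)
  moreover have "x \<in> space (Lmeas k)" using x1(1) by (simp add: space_Lmeas PiE_iff)
  ultimately show "x \<in> srev k -` PiE {..<k} A \<inter> space (Lmeas k)" by simp
qed

lemma distr_srev: "distr (Lmeas k) (Lmeas k) (srev k) = Lmeas k"
proof -
  interpret product_sigma_finite "\<lambda>_. lborel :: real measure"
    by standard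
  have "distr (Lmeas k) (Lmeas k) (srev k) = PiM {..<k} (\<lambda>_. lborel)"
  proof (rule PiM_eqI)
    show "sets (distr (Lmeas k) (Lmeas k) (srev k)) = sets (PiM {..<k} (\<lambda>_. lborel))"
      by (simp add: Lmeas_def)
    fix A :: "nat \<Rightarrow> real set" assume A: "\<And>i. i \<in> {..<k} \<Longrightarrow> A i \<in> sets lborel"
    have "emeasure (distr (Lmeas k) (Lmeas k) (srev k)) (PiE {..<k} A)
        = emeasure (Lmeas k) (srev k -` PiE {..<k} A \<inter> space (Lmeas k))"
      by (rule emeasure_distr[OF srev_meas]) (simp add: Lmeas_def, rule sets_PiM_I_finite, use A in auto)
    also have "\<dots> = (\<Prod>i<k. emeasure lborel (A (k - Suc i)))"
      unfolding srev_pre unfolding Lmeas_def by (rule emeasure_PiM) (use A in auto)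
    also have "\<dots> = (\<Prod>i<k. emeasure lborel (A i))" by (rule prod.nat_diff_reindex)
    finally show "emeasure (distr (Lmeas k) (Lmeas k) (srev k)) (PiE {..<k} A) = (\<Prod>i<k. emeasure lborel (A i))" .
  qed simp
  then show ?thesis by (simp add: Lmeas_def)
qed

lemma sigma_finite_Lmeas: "sigma_finite_measure (Lmeas k)"
proof -
  interpret product_sigma_finite "\<lambda>_. lborel :: real measure" by standard
  show ?thesis unfolding Lmeas_def by (rule sigma_finite) simp
qed

lemma nn_integral_srev:
  assumes f: "f \<in> borel_measurable (Lmeas k)"
  shows "(\<integral>\<^sup>+z. f (srev k z) \<partial>Lmeas k) = (\<integral>\<^sup>+z. f z \<partial>Lmeas k)"
proof -
  have "(\<integral>\<^sup>+z. f z \<partial>Lmeas k) = (\<integral>\<^sup>+z. f z \<partial>distr (Lmeas k) (Lmeas k) (srev k))"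
    by (simp add: distr_srev)
  also have "\<dots> = (\<integral>\<^sup>+z. f (srev k z) \<partial>Lmeas k)"
    by (rule nn_integral_distr[OF srev_meas]) (simp add: f distr_srev)
  finally show ?thesis ..
qed

lemma integrable_srev:
  fixes f :: "_ \<Rightarrow> real"
  assumes f: "integrable (Lmeas k) f"
  shows "integrable (Lmeas k) (\<lambda>z. f (srev k z))"
proof -
  have "integrable (distr (Lmeas k) (Lmeas k) (srev k)) f" using f by (simp add: distr_srev)
  then show ?thesis by (subst (asm) integrable_distr_eq[OF srev_meas]) (use f in auto)
qed

locale setting =
  fixes v :: "real \<Rightarrow> ereal" and rhc R \<beta> p lam0 :: real and k :: nat
    and \<phi> :: "(nat \<Rightarrow> real) \<Rightarrow> real"
  assumes v_meas[measurable]: "v \<in> borel_measurable borel"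
    and rhc_pos: "rhc > 0"
    and hard_core: "\<forall>r. 0 \<le> r \<and> r \<le> rhc \<longrightarrow> v r = \<infinity>"
    and finite_range: "\<forall>r. R \<le> r \<longrightarrow> v r = 0"
    and v_finite: "\<forall>r. rhc < r \<and> r \<le> R \<longrightarrow> \<bar>v r\<bar> \<noteq> \<infinity>"
    and v_bdd_below: "\<exists>c::real. \<forall>r. rhc < r \<and> r \<le> R \<longrightarrow> ereal c \<le> v r"
    and k_ge: "1 \<le> k"
    and beta_pos: "\<beta> > 0"
    and lam_pos: "lam0 > 0"
    and phi_meas[measurable]: "\<phi> \<in> borel_measurable (Lmeas k)"
    and phi_pos: "\<forall>z\<in>hcdom k rhc. \<phi> z > 0"
    and phi_L2: "set_integrable (Lmeas k) (hcdom k rhc) (\<lambda>z. (\<phi> z)\<^sup>2)"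
    and phi_eigen: "\<forall>z\<in>hcdom k rhc.
          set_integrable (Lmeas k) (hcdom k rhc) (\<lambda>z'. Kker v \<beta> p k z z' * \<phi> z') \<and>
          (LINT z':hcdom k rhc|Lmeas k. Kker v \<beta> p k z z' * \<phi> z') = lam0 * \<phi> z"
begin

abbreviation "L \<equiv> Lmeas k"
abbreviation "S \<equiv> hcdom k rhc"

lemma R_gt: "rhc < R"
proof (rule ccontr)
  assume "\<not> rhc < R"
  have "v rhc = \<infinity>" using hard_core rhc_pos by simp
  moreover have "v rhc = 0" using finite_range \<open>\<not> rhc < R\<close> by simp
  ultimately show False by simp
qed

definition vr :: "real \<Rightarrow> real" where "vr r = real_of_ereal (v r)"

lemma vr_meas[measurable]: "vr \<in> borel_measurable borel"
  unfolding vr_def by measurable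

lemma v_fin: assumes "rhc < r" shows "v r = ereal (vr r)"
proof (cases "r \<le> R")
  case True
  then have "\<bar>v r\<bar> \<noteq> \<infinity>" using v_finite assms by auto
  then show ?thesis unfolding vr_def by (simp add: ereal_real')
next
  case False
  then have "v r = 0" using finite_range by auto
  then show ?thesis unfolding vr_def by simp
qed

lemma vr_zero: "R \<le> r \<Longrightarrow> vr r = 0"
  using finite_range unfolding vr_def by simp

definition c0 :: real where "c0 = (SOME c. c \<le> 0 \<and> (\<forall>r. rhc < r \<longrightarrow> c \<le> vr r))"

lemma c0: "c0 \<le> 0" "rhc < r \<Longrightarrow> c0 \<le> vr r"
proof -
  obtain c where c: "\<forall>r. rhc < r \<and> r \<le> R \<longrightarrow> ereal c \<le> v r" using v_bdd_below by blast
  have "min c 0 \<le> 0 \<and> (\<forall>r. rhc < r \<longrightarrow> min c 0 \<le> vr r)"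
  proof (intro conjI allI impI)
    fix r assume r: "rhc < r"
    show "min c 0 \<le> vr r"
    proof (cases "r \<le> R")
      case True
      then have "ereal c \<le> ereal (vr r)" using c r v_fin[OF r] by auto
      then show ?thesis by simp
    next
      case False then show ?thesis using vr_zero by simp
    qed
  qed simp
  then have "c0 \<le> 0 \<and> (\<forall>r. rhc < r \<longrightarrow> c0 \<le> vr r)"
    unfolding c0_def by (rule someI)
  then show "c0 \<le> 0" "rhc < r \<Longrightarrow> c0 \<le> vr r" by auto
qed

lemma S_pos: "z \<in> S \<Longrightarrow> i < k \<Longrightarrow> rhc < z i"
  unfolding hcdom_def by simp

lemma S_space: "z \<in> S \<Longrightarrow> z \<in> space L"
  unfolding hcdom_def by simp

lemma seg_nonneg: assumes z: "z \<in> S" and b: "b \<le> k" shows "0 \<le> (\<Sum>l\<in>{a..<b}. z l)"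
proof (rule sum_nonneg)
  fix l assume "l \<in> {a..<b}"
  then have "rhc < z l" using S_pos[OF z] b by auto
  then show "0 \<le> z l" using rhc_pos by simp
qed

lemma seg_pos: assumes z: "z \<in> S" and ab: "a < b" and b: "b \<le> k"
  shows "rhc < (\<Sum>l\<in>{a..<b}. z l)"
proof -
  have "(\<Sum>l\<in>{a..<b}. z l) = z a + (\<Sum>l\<in>{Suc a..<b}. z l)"
    using ab by (rule sum.atLeast_Suc_lessThan)
  moreover have "rhc < z a" using S_pos[OF z] ab b by simp
  moreover have "0 \<le> (\<Sum>l\<in>{Suc a..<b}. z l)" by (rule seg_nonneg[OF z b])
  ultimately show ?thesis by simp
qed

lemma pre_nonneg: assumes z: "z \<in> S" and j: "j < k" shows "0 \<le> (\<Sum>l\<le>j. z l)"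
proof (rule sum_nonneg)
  fix l assume "l \<in> {..j}"
  then have "rhc < z l" using S_pos[OF z] j by auto
  then show "0 \<le> z l" using rhc_pos by simp
qed

definition VR :: "(nat \<Rightarrow> real) \<Rightarrow> real" where
  "VR z = (\<Sum>i\<in>{0..k}. \<Sum>j\<in>{i<..k}. vr (\<Sum>l\<in>{i..<j}. z l)) + p * (\<Sum>i<k. z i)"

definition WR :: "(nat \<Rightarrow> real) \<Rightarrow> (nat \<Rightarrow> real) \<Rightarrow> real" where
  "WR z z' = (\<Sum>i<k. \<Sum>j<k. vr ((\<Sum>l\<in>{i..<k}. z l) + (\<Sum>l\<le>j. z' l)))"

lemma Vp_real: assumes z: "z \<in> S" shows "Vp v p k z = ereal (VR z)"
proof -
  have "(\<Sum>i\<in>{0..k}. \<Sum>j\<in>{i<..k}. v (\<Sum>l\<in>{i..<j}. z l))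
      = (\<Sum>i\<in>{0..k}. \<Sum>j\<in>{i<..k}. ereal (vr (\<Sum>l\<in>{i..<j}. z l)))"
  proof (intro sum.cong refl)
    fix i j assume "i \<in> {0..k}" "j \<in> {i<..k}"
    then show "v (\<Sum>l\<in>{i..<j}. z l) = ereal (vr (\<Sum>l\<in>{i..<j}. z l))"
      using seg_pos[OF z] by (intro v_fin) auto
  qed
  then show ?thesis unfolding Vp_def VR_def by simp
qed

lemma W_arg: assumes z: "z \<in> S" and z': "z' \<in> S" and i: "i < k" and j: "j < k"
  shows "rhc < (\<Sum>l\<in>{i..<k}. z l) + (\<Sum>l\<le>j. z' l)"
  using seg_pos[OF z i order.refl] pre_nonneg[OF z' j] by simp

lemma Wint_real: assumes z: "z \<in> S" and z': "z' \<in> S" shows "Wint v k z z' = ereal (WR z z')"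
proof -
  have "(\<Sum>i<k. \<Sum>j<k. v ((\<Sum>l\<in>{i..<k}. z l) + (\<Sum>l\<le>j. z' l)))
      = (\<Sum>i<k. \<Sum>j<k. ereal (vr ((\<Sum>l\<in>{i..<k}. z l) + (\<Sum>l\<le>j. z' l))))"
  proof (intro sum.cong refl)
    fix i j assume "i \<in> {..<k}" "j \<in> {..<k}"
    then show "v ((\<Sum>l\<in>{i..<k}. z l) + (\<Sum>l\<le>j. z' l)) = ereal (vr ((\<Sum>l\<in>{i..<k}. z l) + (\<Sum>l\<le>j. z' l)))"
      using W_arg[OF z z'] by (intro v_fin) auto
  qed
  then show ?thesis unfolding Wint_def WR_def by simp
qed

lemma Kker_real: assumes z: "z \<in> S" and z': "z' \<in> S"
  shows "Kker v \<beta> p k z z' = exp (- (\<beta> * (VR z / 2 + WR z z' + VR z' / 2)))"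
  unfolding Kker_def Vp_real[OF z] Vp_real[OF z'] Wint_real[OF z z'] boltz_def by simp

lemma Kker_nonneg: "0 \<le> Kker v \<beta> p k z z'"
  unfolding Kker_def boltz_def by simp

lemma WR_lower: assumes z: "z \<in> S" and z': "z' \<in> S" shows "real k * (real k * c0) \<le> WR z z'"
proof -
  have "(\<Sum>i<k. \<Sum>j<k. c0) \<le> WR z z'"
    unfolding WR_def
  proof (intro sum_mono)
    fix i j assume "i \<in> {..<k}" "j \<in> {..<k}"
    then show "c0 \<le> vr ((\<Sum>l\<in>{i..<k}. z l) + (\<Sum>l\<le>j. z' l))"
      using W_arg[OF z z'] by (intro c0) auto
  qed
  then show ?thesis using k_ge by (simp add: of_nat_diff)
qed

lemma WR_zero1: assumes z: "z \<in> S" and z': "z' \<in> S" and R: "R \<le> z' 0" shows "WR z z' = 0"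
  unfolding WR_def
proof (intro sum.neutral ballI)
  fix i j assume i: "i \<in> {..<k}" and j: "j \<in> {..<k}"
  have "z' 0 \<le> (\<Sum>l\<le>j. z' l)"
  proof (rule member_le_sum)
    fix l assume "l \<in> {..j} - {0}"
    then have "rhc < z' l" using S_pos[OF z'] j by auto
    then show "0 \<le> z' l" using rhc_pos by simp
  qed auto
  moreover have "0 \<le> (\<Sum>l\<in>{i..<k}. z l)" by (rule seg_nonneg[OF z]) simp
  ultimately show "vr ((\<Sum>l\<in>{i..<k}. z l) + (\<Sum>l\<le>j. z' l)) = 0"
    using R by (intro vr_zero) simp
qed

lemma WR_zero2: assumes z: "z \<in> S" and z': "z' \<in> S" and R: "R \<le> z (k - 1)" shows "WR z z' = 0"
  unfolding WR_def
proof (intro sum.neutral ballI)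
  fix i j assume i: "i \<in> {..<k}" and j: "j \<in> {..<k}"
  have "z (k - 1) \<le> (\<Sum>l\<in>{i..<k}. z l)"
  proof (rule member_le_sum)
    fix l assume "l \<in> {i..<k} - {k - 1}"
    then have "rhc < z l" using S_pos[OF z] by auto
    then show "0 \<le> z l" using rhc_pos by simp
  qed (use i in auto)
  moreover have "0 \<le> (\<Sum>l\<le>j. z' l)" by (rule pre_nonneg[OF z']) (use j in simp)
  ultimately show "vr ((\<Sum>l\<in>{i..<k}. z l) + (\<Sum>l\<le>j. z' l)) = 0"
    using R by (intro vr_zero) simp
qed


lemma Kk_meas[measurable]: "(\<lambda>x. Kker v \<beta> p k (fst x) (snd x)) \<in> borel_measurable (L \<Otimes>\<^sub>M L)"
  unfolding Kker_def Vp_def Wint_def Lmeas_def by measurable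

lemma VR_meas[measurable]: "VR \<in> borel_measurable L"
  unfolding VR_def Lmeas_def by measurable

definition E :: "(nat \<Rightarrow> real) \<Rightarrow> real" where "E z = exp (- (\<beta> * (VR z / 2)))"

lemma E_meas[measurable]: "E \<in> borel_measurable L"
  unfolding E_def by measurable

lemma E_pos: "0 < E z" unfolding E_def by simp

lemma Kker_split: assumes z: "z \<in> S" and z': "z' \<in> S"
  shows "Kker v \<beta> p k z z' = E z * exp (- (\<beta> * WR z z')) * E z'"
  unfolding Kker_real[OF z z'] E_def by (simp add: exp_add[symmetric] algebra_simps)

lemma phi_pos': "z \<in> S \<Longrightarrow> 0 < \<phi> z" using phi_pos by auto

lemma eigen: assumes z: "z \<in> S"
  shows "integrable L (\<lambda>y. indicator S y * (Kker v \<beta> p k z y * \<phi> y))"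
    and "(\<integral>y. indicator S y * (Kker v \<beta> p k z y * \<phi> y) \<partial>L) = lam0 * \<phi> z"
  using phi_eigen z by (auto simp: set_integrable_def set_lebesgue_integral_def)

definition zs :: "nat \<Rightarrow> real" where "zs = (\<lambda>i. if i < k then R + 1 else undefined)"

lemma zs_S: "zs \<in> S"
  using R_gt unfolding hcdom_def zs_def space_Lmeas by (simp add: PiE_iff extensional_def)

lemma zs_R: "R \<le> zs (k - 1)"
proof -
  have "k - 1 < k" using k_ge by simp
  then show ?thesis unfolding zs_def by simp
qed

definition gS :: "(nat \<Rightarrow> real) \<Rightarrow> real" where "gS y = indicator S y * (E y * \<phi> y)"

lemma gS_meas[measurable]: "gS \<in> borel_measurable L"
  unfolding gS_def by measurable

lemma gS_nonneg: "0 \<le> gS y"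
  unfolding gS_def using E_pos phi_pos' by (auto simp: indicator_def less_imp_le)

lemma gS_int: "integrable L gS"
proof -
  have "integrable L (\<lambda>y. (1 / E zs) * (indicator S y * (Kker v \<beta> p k zs y * \<phi> y)))"
    using eigen(1)[OF zs_S] by simp
  moreover have "(1 / E zs) * (indicator S y * (Kker v \<beta> p k zs y * \<phi> y)) = gS y" for y
  proof (cases "y \<in> S")
    case True
    then show ?thesis unfolding gS_def
      using Kker_split[OF zs_S True] WR_zero2[OF zs_S True zs_R] E_pos[of zs] by simp
  next
    case False then show ?thesis unfolding gS_def by simp
  qed
  ultimately show ?thesis by simp
qed

definition G :: real where "G = (\<integral>y. gS y \<partial>L)"

definition B :: "(nat \<Rightarrow> real) set" where "B = S \<inter> {y \<in> space L. R \<le> y 0}"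

lemma B_sets[measurable]: "B \<in> sets L"
proof -
  have "(\<lambda>y. y 0) \<in> measurable L lborel"
    unfolding Lmeas_def by (rule measurable_component_singleton) (use k_ge in simp)
  then have "(\<lambda>y. y 0) -` {R..} \<inter> space L \<in> sets L" by (rule measurable_sets) simp
  moreover have "{y \<in> space L. R \<le> y 0} = (\<lambda>y. y 0) -` {R..} \<inter> space L" by auto
  ultimately show ?thesis unfolding B_def by simp
qed

lemma B_S: "B \<subseteq> S" unfolding B_def by auto

lemma B_pos: "emeasure L B \<noteq> 0"
proof -
  interpret product_sigma_finite "\<lambda>_. lborel :: real measure" by standard
  define Bx where "Bx = PiE {..<k} (\<lambda>i. if i = 0 then {R..R+1} else {rhc<..rhc+1})"
  have "Bx \<subseteq> B"
  proof
    fix y assume y: "y \<in> Bx"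
    have "\<forall>i<k. rhc < y i"
    proof (intro allI impI)
      fix i assume "i < k"
      then have "y i \<in> (if i = 0 then {R..R+1} else {rhc<..rhc+1})" using y unfolding Bx_def by (simp add: PiE_iff)
      then show "rhc < y i" using R_gt by (cases "i = 0") auto
    qed
    moreover have "R \<le> y 0"
    proof -
      have "0 < k" using k_ge by simp
      have "\<forall>i\<in>{..<k}. y i \<in> (if i = 0 then {R..R+1} else {rhc<..rhc+1})"
        using y unfolding Bx_def by (simp add: PiE_iff)
      then have "y 0 \<in> {R..R+1}" using \<open>0 < k\<close> by (metis lessThan_iff)
      then show ?thesis by simp
    qed
    moreover have "y \<in> space L" using y unfolding Bx_def space_Lmeas by (simp add: PiE_iff)
    ultimately show "y \<in> B" unfolding B_def hcdom_def by simp
  qed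
  moreover have "emeasure L Bx = 1"
  proof -
    have "emeasure L Bx = (\<Prod>i<k. emeasure lborel (if i = 0 then {R..R+1} else {rhc<..rhc+1}))"
      unfolding Bx_def Lmeas_def by (rule emeasure_PiM) auto
    also have "\<dots> = (\<Prod>i<k. 1)" by (intro prod.cong refl) simp
    finally show ?thesis by simp
  qed
  moreover have "Bx \<in> sets L" unfolding Bx_def Lmeas_def by (rule sets_PiM_I_finite) auto
  ultimately have "1 \<le> emeasure L B" using emeasure_mono[of Bx B L] B_sets by simp
  then show ?thesis by auto
qed

definition nB :: "(nat \<Rightarrow> real) \<Rightarrow> real" where "nB y = indicator B y * (E y * \<phi> y)"

lemma nB_meas[measurable]: "nB \<in> borel_measurable L"
  unfolding nB_def by measurable

lemma nB_le: "0 \<le> nB y \<and> nB y \<le> gS y"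
  unfolding nB_def gS_def using B_S E_pos phi_pos' by (auto simp: indicator_def less_imp_le)

lemma nB_int: "integrable L nB"
proof (rule Bochner_Integration.integrable_bound[OF gS_int nB_meas])
  have "norm (nB x) \<le> norm (gS x)" for x using nB_le[of x] gS_nonneg[of x] by simp
  then show "AE x in L. norm (nB x) \<le> norm (gS x)" by simp
qed

definition Gb :: real where "Gb = (\<integral>y. nB y \<partial>L)"

lemma pos_integral:
  fixes f :: "_ \<Rightarrow> real"
  assumes f: "integrable L f" and nn: "\<And>y. 0 \<le> f y" and pos: "\<And>y. y \<in> B \<Longrightarrow> 0 < f y"
  shows "0 < (\<integral>y. f y \<partial>L)"
proof -
  have ge: "0 \<le> (\<integral>y. f y \<partial>L)" using nn by simp
  have "(\<integral>y. f y \<partial>L) \<noteq> 0"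
  proof
    assume "(\<integral>y. f y \<partial>L) = 0"
    then have "AE y in L. f y = 0" using integral_nonneg_eq_0_iff_AE[OF f] nn by simp
    then have "AE y in L. y \<notin> B" by (rule AE_mp) (auto intro!: AE_I2 dest: pos)
    then have "emeasure L B = 0"
      using AE_iff_measurable[OF B_sets, of "\<lambda>y. y \<notin> B"] B_sets sets.sets_into_space by blast
    then show False using B_pos by simp
  qed
  then show ?thesis using ge by simp
qed

lemma Gb_pos: "0 < Gb"
  unfolding Gb_def
  by (rule pos_integral[OF nB_int]) (use nB_le B_S E_pos phi_pos' in \<open>auto simp: nB_def\<close>)

lemma Gb_le_G: "Gb \<le> G"
  unfolding Gb_def G_def by (rule integral_mono[OF nB_int gS_int]) (use nB_le in auto)

lemma G_pos: "0 < G" using Gb_pos Gb_le_G by simp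

definition cW :: real where "cW = real k * (real k * c0)"

lemma eigen_upper: assumes z: "z \<in> S"
  shows "lam0 * \<phi> z \<le> E z * exp (- (\<beta> * cW)) * G"
proof -
  have "lam0 * \<phi> z = (\<integral>y. indicator S y * (Kker v \<beta> p k z y * \<phi> y) \<partial>L)" using eigen(2)[OF z] by simp
  also have "\<dots> \<le> (\<integral>y. (E z * exp (- (\<beta> * cW))) * gS y \<partial>L)"
  proof (rule integral_mono)
    show "integrable L (\<lambda>y. indicator S y * (Kker v \<beta> p k z y * \<phi> y))" by (rule eigen(1)[OF z])
    show "integrable L (\<lambda>y. (E z * exp (- (\<beta> * cW))) * gS y)" using gS_int by simp
    fix y
    show "indicator S y * (Kker v \<beta> p k z y * \<phi> y) \<le> (E z * exp (- (\<beta> * cW))) * gS y"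
    proof (cases "y \<in> S")
      case True
      have "exp (- (\<beta> * WR z y)) \<le> exp (- (\<beta> * cW))"
        using WR_lower[OF z True] beta_pos unfolding cW_def by (simp add: mult_left_mono)
      then have "E z * exp (- (\<beta> * WR z y)) * E y * \<phi> y \<le> E z * exp (- (\<beta> * cW)) * E y * \<phi> y"
        using E_pos[of z] E_pos[of y] phi_pos'[OF True] by (intro mult_right_mono) auto
      then show ?thesis using True unfolding gS_def Kker_split[OF z True] by (simp add: mult_ac)
    next
      case False then show ?thesis unfolding gS_def by simp
    qed
  qed
  also have "\<dots> = E z * exp (- (\<beta> * cW)) * G" unfolding G_def by simp
  finally show ?thesis .
qed

definition pk :: "(nat \<Rightarrow> real) \<Rightarrow> (nat \<Rightarrow> real) \<Rightarrow> real" where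
  "pk z y = indicator S y * Kker v \<beta> p k z y * \<phi> y / (lam0 * \<phi> z)"

definition eps0 :: real where "eps0 = Gb / (exp (- (\<beta> * cW)) * G)"

lemma eps0_pos: "0 < eps0" unfolding eps0_def using Gb_pos G_pos by simp

lemma pk_nonneg: assumes z: "z \<in> S" shows "0 \<le> pk z y"
proof (cases "y \<in> S")
  case True
  have "0 \<le> Kker v \<beta> p k z y * \<phi> y" using Kker_nonneg[of z y] phi_pos'[OF True] by simp
  moreover have "0 < lam0 * \<phi> z" using lam_pos phi_pos'[OF z] by simp
  ultimately show ?thesis unfolding pk_def using True by (simp add: mult.assoc)
next
  case False then show ?thesis unfolding pk_def by simp
qed

lemma minor_pt: assumes z: "z \<in> S" shows "eps0 * (nB y / Gb) \<le> pk z y"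
proof (cases "y \<in> B")
  case True
  then have y: "y \<in> S" using B_S by auto
  have W0: "WR z y = 0" using True WR_zero1[OF z y] unfolding B_def by simp
  have a: "0 \<le> E z * (E y * \<phi> y)" using E_pos[of z] E_pos[of y] phi_pos'[OF y] by simp
  have "pk z y = E z * (E y * \<phi> y) / (lam0 * \<phi> z)"
    unfolding pk_def using y Kker_split[OF z y] W0 by (simp add: mult_ac)
  also have "\<dots> \<ge> E z * (E y * \<phi> y) / (E z * exp (- (\<beta> * cW)) * G)"
    by (rule divide_left_mono[OF eigen_upper[OF z] a]) (use lam_pos phi_pos'[OF z] E_pos[of z] G_pos in simp)
  moreover have "E z * (E y * \<phi> y) / (E z * exp (- (\<beta> * cW)) * G) = eps0 * (nB y / Gb)"
    unfolding eps0_def nB_def using True E_pos[of z] Gb_pos by (simp add: field_simps)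
  ultimately show ?thesis by simp
next
  case False
  then show ?thesis using pk_nonneg[OF z] unfolding nB_def by simp
qed


abbreviation "Pt \<equiv> Ptrans v \<beta> p k rhc lam0 \<phi>"

lemma pk_meas2[measurable]: "(\<lambda>x. pk (fst x) (snd x)) \<in> borel_measurable (L \<Otimes>\<^sub>M L)"
  unfolding pk_def by measurable

lemma pk_meas[measurable]: "z \<in> space L \<Longrightarrow> pk z \<in> borel_measurable L"
  using measurable_Pair2[OF pk_meas2] by simp

lemma Pt_eq: "Pt z = density L (\<lambda>y. ennreal (pk z y))"
  unfolding Ptrans_def pk_def by simp

lemma sets_Pt[simp]: "sets (Pt z) = sets L" unfolding Pt_eq by simp
lemma space_Pt[simp]: "space (Pt z) = space L" unfolding Pt_eq by simp

lemma emeasure_Pt: assumes z: "z \<in> space L" and A: "A \<in> sets L"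
  shows "emeasure (Pt z) A = (\<integral>\<^sup>+y. ennreal (pk z y) * indicator A y \<partial>L)"
  unfolding Pt_eq by (rule emeasure_density[OF _ A]) (use pk_meas[OF z] in measurable)

lemma Pt_emeas_meas[measurable]: assumes A: "A \<in> sets L" shows "(\<lambda>z. emeasure (Pt z) A) \<in> borel_measurable L"
proof -
  interpret sigma_finite_measure L by (rule sigma_finite_Lmeas)
  have "(\<lambda>z. \<integral>\<^sup>+y. ennreal (pk z y) * indicator A y \<partial>L) \<in> borel_measurable L"
    by (rule borel_measurable_nn_integral) (use A in measurable)
  then show ?thesis by (rule measurable_cong[THEN iffD1, rotated]) (simp add: emeasure_Pt[OF _ A])
qed

lemma pk_int: assumes z: "z \<in> S" shows "integrable L (pk z)" and "(\<integral>y. pk z y \<partial>L) = 1"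
proof -
  have eq: "pk z = (\<lambda>y. indicator S y * (Kker v \<beta> p k z y * \<phi> y) / (lam0 * \<phi> z))"
    unfolding pk_def by (simp add: mult.assoc)
  show "integrable L (pk z)" unfolding eq using eigen(1)[OF z] by simp
  show "(\<integral>y. pk z y \<partial>L) = 1" unfolding eq using eigen(2)[OF z] lam_pos phi_pos'[OF z] by simp
qed

lemma Pt_space: assumes z: "z \<in> S" shows "emeasure (Pt z) (space L) = 1"
proof -
  have "emeasure (Pt z) (space L) = (\<integral>\<^sup>+y. ennreal (pk z y) \<partial>L)"
    unfolding emeasure_Pt[OF S_space[OF z] sets.top] by (rule nn_integral_cong) simp
  also have "\<dots> = ennreal (\<integral>y. pk z y \<partial>L)"
    by (rule nn_integral_eq_integral[OF pk_int(1)[OF z]]) (use pk_nonneg[OF z] in simp)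
  finally show ?thesis using pk_int(2)[OF z] by simp
qed

lemma Pt_prob: "z \<in> S \<Longrightarrow> prob_space (Pt z)"
  by (rule prob_spaceI) (simp add: Pt_space)

lemma Pt_S: assumes z: "z \<in> S" shows "emeasure (Pt z) (space L - S) = 0"
proof -
  have "emeasure (Pt z) (space L - S) = (\<integral>\<^sup>+y. 0 \<partial>L)"
    unfolding emeasure_Pt[OF S_space[OF z] sets.Diff[OF sets.top hcdom_sets]]
    by (rule nn_integral_cong) (simp add: pk_def indicator_def)
  then show ?thesis by simp
qed

definition eps :: real where "eps = min eps0 (1/2)"

lemma eps: "0 < eps" "eps < 1" "eps \<le> eps0"
  unfolding eps_def using eps0_pos by auto

definition nu :: "(nat \<Rightarrow> real) measure" where "nu = density L (\<lambda>y. ennreal (nB y / Gb))"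

lemma nu_sets: "sets nu = sets L" unfolding nu_def by simp

lemma nu_prob: "prob_space nu"
proof (rule prob_spaceI)
  have "emeasure nu (space nu) = emeasure nu (space L)" by (simp add: nu_def)
  also have "\<dots> = (\<integral>\<^sup>+y. ennreal (nB y / Gb) * indicator (space L) y \<partial>L)"
    unfolding nu_def by (rule emeasure_density) simp_all
  also have "\<dots> = (\<integral>\<^sup>+y. ennreal (nB y / Gb) \<partial>L)"
    by (rule nn_integral_cong) simp
  also have "\<dots> = ennreal (\<integral>y. nB y / Gb \<partial>L)"
    by (rule nn_integral_eq_integral) (use nB_int nB_le Gb_pos in auto)
  also have "\<dots> = 1" using Gb_pos unfolding Gb_def by simp
  finally show "emeasure nu (space nu) = 1" .
qed

lemma Pt_minor: assumes z: "z \<in> S" and A: "A \<in> sets L"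
  shows "ennreal eps * emeasure nu A \<le> emeasure (Pt z) A"
proof -
  have "ennreal eps * emeasure nu A = ennreal eps * (\<integral>\<^sup>+y. ennreal (nB y / Gb) * indicator A y \<partial>L)"
    unfolding nu_def by (subst emeasure_density[OF _ A]) simp_all
  also have "\<dots> = (\<integral>\<^sup>+y. ennreal eps * (ennreal (nB y / Gb) * indicator A y) \<partial>L)"
    by (rule nn_integral_cmult[symmetric]) (use A in measurable)
  also have "\<dots> \<le> (\<integral>\<^sup>+y. ennreal (pk z y) * indicator A y \<partial>L)"
  proof (rule nn_integral_mono)
    fix y
    have "eps * (nB y / Gb) \<le> eps0 * (nB y / Gb)"
      using eps(3) nB_le[of y] Gb_pos by (intro mult_right_mono) auto
    also have "\<dots> \<le> pk z y" by (rule minor_pt[OF z])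
    finally have "ennreal (eps * (nB y / Gb)) \<le> ennreal (pk z y)" by (rule ennreal_leI)
    moreover have "ennreal (eps * (nB y / Gb)) = ennreal eps * ennreal (nB y / Gb)"
      using eps(1) nB_le[of y] Gb_pos by (intro ennreal_mult) auto
    ultimately have "ennreal eps * ennreal (nB y / Gb) \<le> ennreal (pk z y)" by simp
    then show "ennreal eps * (ennreal (nB y / Gb) * indicator A y) \<le> ennreal (pk z y) * indicator A y"
      by (simp add: indicator_def)
  qed
  also have "\<dots> = emeasure (Pt z) A" using emeasure_Pt[OF S_space[OF z] A] by simp
  finally show ?thesis .
qed

definition U :: "(nat \<Rightarrow> real) set" where "U = {z \<in> space L. emeasure (Pt z) (space L) \<le> 1}"

lemma U_sets[measurable]: "U \<in> sets L"
proof -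
  have [measurable]: "(\<lambda>z. emeasure (Pt z) (space L)) \<in> borel_measurable L"
    by (rule Pt_emeas_meas) simp
  show ?thesis unfolding U_def by measurable
qed

lemma S_U: "S \<subseteq> U" unfolding U_def using Pt_space S_space by auto

definition Qk :: "(nat \<Rightarrow> real) \<Rightarrow> (nat \<Rightarrow> real) measure" where
  "Qk z = (if z \<in> U then Pt z else null_measure L)"

lemma space_L_ne: "space L \<noteq> {}" using S_space zs_S by blast

lemma Qk_meas: "Qk \<in> measurable L (subprob_algebra L)"
proof (rule measurable_subprob_algebra)
  fix a assume a: "a \<in> space L"
  show "subprob_space (Qk a)"
  proof (cases "a \<in> U")
    case True
    then show ?thesis unfolding Qk_def U_def using space_L_ne by (intro subprob_spaceI) auto
  next
    case False
    then show ?thesis unfolding Qk_def using space_L_ne by (simp add: subprob_space_null_measure)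
  qed
  show "sets (Qk a) = sets L" unfolding Qk_def by simp
next
  fix A assume A: "A \<in> sets L"
  have [measurable]: "(\<lambda>z. emeasure (Pt z) A) \<in> borel_measurable L" by (rule Pt_emeas_meas[OF A])
  have "(\<lambda>a. if a \<in> U then emeasure (Pt a) A else 0) \<in> borel_measurable L" by measurable
  moreover have "(\<lambda>a. emeasure (Qk a) A) = (\<lambda>a. if a \<in> U then emeasure (Pt a) A else 0)"
    unfolding Qk_def by auto
  ultimately show "(\<lambda>a. emeasure (Qk a) A) \<in> borel_measurable L" by simp
qed

lemma Qk_S: "z \<in> S \<Longrightarrow> Qk z = Pt z" unfolding Qk_def using S_U by auto

lemma doeblin_inst: "doeblin L S Qk nu eps"
proof (rule doeblin.intro)
  show "S \<in> sets L" by (rule hcdom_sets)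
  show "Qk \<in> measurable L (subprob_algebra L)" by (rule Qk_meas)
  show "\<And>y. y \<in> S \<Longrightarrow> prob_space (Qk y)" by (simp add: Qk_S Pt_prob)
  show "\<And>y. y \<in> S \<Longrightarrow> emeasure (Qk y) (space L - S) = 0" by (simp add: Qk_S Pt_S)
  show "prob_space nu" by (rule nu_prob)
  show "sets nu = sets L" by (rule nu_sets)
  show "0 < eps" using eps by auto
  show "eps < 1" using eps by auto
  show "\<And>y A. y \<in> S \<Longrightarrow> A \<in> sets L \<Longrightarrow> ennreal eps * emeasure nu A \<le> emeasure (Qk y) A"
    by (simp add: Qk_S Pt_minor)
qed


lemma pk_meas_raw[measurable (raw)]:
  assumes "f \<in> measurable M L" "g \<in> measurable M L"
  shows "(\<lambda>x. pk (f x) (g x)) \<in> borel_measurable M"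
  using measurable_compose[OF measurable_Pair[OF assms] pk_meas2] by simp

lemma Kk_meas_raw[measurable (raw)]:
  assumes "f \<in> measurable M L" "g \<in> measurable M L"
  shows "(\<lambda>x. Kker v \<beta> p k (f x) (g x)) \<in> borel_measurable M"
  using measurable_compose[OF measurable_Pair[OF assms] Kk_meas] by simp

definition Zf :: "(nat \<Rightarrow> real) \<Rightarrow> real" where "Zf y = indicator S y * (\<phi> (srev k y) * \<phi> y)"

definition Z :: real where "Z = (\<integral>y. Zf y \<partial>L)"

lemma Zf_meas[measurable]: "Zf \<in> borel_measurable L"
  unfolding Zf_def by measurable

lemma Zf_nonneg: "0 \<le> Zf y"
proof (cases "y \<in> S")
  case True
  then have "srev k y \<in> S" using srev_hcdom S_space by blast
  then show ?thesis unfolding Zf_def using True phi_pos' by (simp add: less_imp_le)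
next
  case False then show ?thesis unfolding Zf_def by simp
qed

lemma Zf_int: "integrable L Zf"
proof -
  define f2 where "f2 y = indicator S y * (\<phi> y)\<^sup>2" for y
  have i1: "integrable L f2" using phi_L2 unfolding f2_def set_integrable_def by simp
  have i2: "integrable L (\<lambda>y. f2 (srev k y))" by (rule integrable_srev[OF i1])
  have i3: "integrable L (\<lambda>y. (f2 y + f2 (srev k y)) / 2)" using i1 i2 by simp
  show ?thesis
  proof (rule Bochner_Integration.integrable_bound[OF i3 Zf_meas], rule AE_I2)
    fix y assume y: "y \<in> space L"
    show "norm (Zf y) \<le> norm ((f2 y + f2 (srev k y)) / 2)"
    proof (cases "y \<in> S")
      case True
      then have sy: "srev k y \<in> S" using srev_hcdom y by blast
      have "2 * (\<phi> (srev k y) * \<phi> y) \<le> (\<phi> y)\<^sup>2 + (\<phi> (srev k y))\<^sup>2"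
        using sum_squares_bound[of "\<phi> (srev k y)" "\<phi> y"] by (simp add: power2_eq_square algebra_simps)
      then show ?thesis using True sy Zf_nonneg[of y] unfolding Zf_def f2_def
        by (simp add: abs_of_nonneg)
    next
      case False
      then have "srev k y \<notin> S" using srev_hcdom y by blast
      then show ?thesis using False unfolding Zf_def f2_def by simp
    qed
  qed
qed

lemma Z_pos: "0 < Z"
  unfolding Z_def
proof (rule pos_integral[OF Zf_int Zf_nonneg])
  fix y assume "y \<in> B"
  then have y: "y \<in> S" using B_S by auto
  then have "srev k y \<in> S" using srev_hcdom S_space by blast
  then show "0 < Zf y" unfolding Zf_def using y phi_pos' by simp
qed

abbreviation "PI \<equiv> pi_meas k rhc \<phi>"

lemma pi_eq: "PI = density L (\<lambda>z. ennreal (Zf z / Z))"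
  unfolding pi_meas_def Zf_def Z_def set_lebesgue_integral_def by (simp add: mult.assoc)

lemma sets_pi: "sets PI = sets L" unfolding pi_eq by simp
lemma space_pi: "space PI = space L" unfolding pi_eq by simp

lemma pi_prob: "prob_space PI"
proof (rule prob_spaceI)
  have "emeasure PI (space PI) = emeasure PI (space L)" by (simp add: space_pi)
  also have "\<dots> = (\<integral>\<^sup>+y. ennreal (Zf y / Z) * indicator (space L) y \<partial>L)"
    unfolding pi_eq by (rule emeasure_density) simp_all
  also have "\<dots> = (\<integral>\<^sup>+y. ennreal (Zf y / Z) \<partial>L)"
    by (rule nn_integral_cong) simp
  also have "\<dots> = ennreal (\<integral>y. Zf y / Z \<partial>L)"
    by (rule nn_integral_eq_integral) (use Zf_int Zf_nonneg Z_pos in auto)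
  also have "\<dots> = 1" using Z_pos unfolding Z_def by simp
  finally show "emeasure PI (space PI) = 1" .
qed

lemma pi_AE: "AE x in PI. x \<in> S"
  unfolding pi_eq
  by (subst AE_density) (auto simp: Zf_def indicator_def intro!: AE_I2)

lemma bind_pi_Qk: "PI \<bind> Qk = PI"
proof (rule measure_eqI)
  have ne: "space PI \<noteq> {}" using space_pi space_L_ne by simp
  have piQ: "Qk \<in> measurable PI (subprob_algebra L)"
    using Qk_meas by (simp add: measurable_cong_sets[OF sets_pi refl])
  have sb: "sets (PI \<bind> Qk) = sets L"
    by (rule sets_bind[OF _ ne]) (use sets_kernel[OF Qk_meas] space_pi in auto)
  show "sets (PI \<bind> Qk) = sets PI" using sb sets_pi by simp
  fix A assume "A \<in> sets (PI \<bind> Qk)"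
  then have A[measurable]: "A \<in> sets L" using sb by simp
  interpret LL: pair_sigma_finite L L by (simp add: pair_sigma_finite_def sigma_finite_Lmeas)
  define T where "T y x = Zf y / Z * pk y x * indicator A x" for y x
  have T_nonneg: "0 \<le> T y x" if "y \<in> S" for y x
    unfolding T_def using Zf_nonneg[of y] Z_pos pk_nonneg[OF that, of x] by simp
  have T_out: "T y x = 0" if "y \<notin> S" for y x unfolding T_def Zf_def using that by simp
  have [measurable]: "(\<lambda>x. Qk x) \<in> measurable L (subprob_algebra L)" by (rule Qk_meas)
  have "emeasure (PI \<bind> Qk) A = (\<integral>\<^sup>+y. emeasure (Qk y) A \<partial>PI)"
    by (rule emeasure_bind[OF ne piQ A])
  also have "\<dots> = (\<integral>\<^sup>+y. ennreal (Zf y / Z) * emeasure (Qk y) A \<partial>L)"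
    unfolding pi_eq by (rule nn_integral_density) measurable
  also have "\<dots> = (\<integral>\<^sup>+y. \<integral>\<^sup>+x. ennreal (T y x) \<partial>L \<partial>L)"
  proof (rule nn_integral_cong)
    fix y assume y: "y \<in> space L"
    show "ennreal (Zf y / Z) * emeasure (Qk y) A = (\<integral>\<^sup>+x. ennreal (T y x) \<partial>L)"
    proof (cases "y \<in> S")
      case True
      have "ennreal (Zf y / Z) * emeasure (Qk y) A
          = ennreal (Zf y / Z) * (\<integral>\<^sup>+x. ennreal (pk y x) * indicator A x \<partial>L)"
        using True by (simp add: Qk_S emeasure_Pt[OF y A])
      also have "\<dots> = (\<integral>\<^sup>+x. ennreal (Zf y / Z) * (ennreal (pk y x) * indicator A x) \<partial>L)"
        by (rule nn_integral_cmult[symmetric]) (use pk_meas[OF y] in measurable)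
      also have "\<dots> = (\<integral>\<^sup>+x. ennreal (T y x) \<partial>L)"
      proof (rule nn_integral_cong)
        fix x
        have "0 \<le> Zf y / Z" using Zf_nonneg[of y] Z_pos by simp
        moreover have "0 \<le> pk y x" using pk_nonneg[OF True] .
        ultimately have e: "ennreal (Zf y / Z) * ennreal (pk y x) = ennreal (Zf y / Z * pk y x)"
          by (intro ennreal_mult[symmetric])
        show "ennreal (Zf y / Z) * (ennreal (pk y x) * indicator A x) = ennreal (T y x)"
          unfolding T_def by (cases "x \<in> A") (simp_all add: e)
      qed
      finally show ?thesis .
    next
      case False
      then show ?thesis by (simp add: T_out Zf_def)
    qed
  qed
  also have "\<dots> = (\<integral>\<^sup>+x. \<integral>\<^sup>+y. ennreal (T y x) \<partial>L \<partial>L)"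
    by (rule LL.Fubini'[where f = "\<lambda>x y. ennreal (T y x)"]) (unfold T_def, measurable)
  also have "\<dots> = (\<integral>\<^sup>+x. ennreal (Zf x / Z) * indicator A x \<partial>L)"
  proof (rule nn_integral_cong)
    fix x assume x: "x \<in> space L"
    show "(\<integral>\<^sup>+y. ennreal (T y x) \<partial>L) = ennreal (Zf x / Z) * indicator A x"
    proof (cases "x \<in> S")
      case False
      have "T y x = 0" for y unfolding T_def pk_def using False by simp
      then show ?thesis using False by (simp add: Zf_def)
    next
      case True
      have sx: "srev k x \<in> S" using srev_hcdom x True by blast
      have sxL: "srev k x \<in> space L" using srev_space x by blast
      define c where "c = indicator A x * \<phi> x / (Z * lam0)"
      define J where "J w = indicator S w * (Kker v \<beta> p k (srev k x) w * \<phi> w)" for w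
      have c_nn: "0 \<le> c" unfolding c_def using phi_pos'[OF True] Z_pos lam_pos by simp
      have J_meas: "J \<in> borel_measurable L"
      proof -
        have "(\<lambda>w. Kker v \<beta> p k (srev k x) w) \<in> borel_measurable L"
          using measurable_Pair2[OF Kk_meas sxL] by simp
        then show ?thesis unfolding J_def by measurable
      qed
      have J_nn: "0 \<le> J w" for w
        unfolding J_def using Kker_nonneg[of "srev k x" w] phi_pos' by (cases "w \<in> S") (auto simp: less_imp_le)
      have T_eq: "T y x = c * J (srev k y)" if y: "y \<in> space L" for y
      proof (cases "y \<in> S")
        case True': True
        have sy: "srev k y \<in> S" using srev_hcdom y True' by blast
        have "J (srev k y) = Kker v \<beta> p k y x * \<phi> (srev k y)"
          unfolding J_def using sy Kker_srev[where z=y and z'=x] by simp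
        then show ?thesis unfolding T_def c_def Zf_def pk_def
          using True True' phi_pos'[OF True'] Z_pos lam_pos by (simp add: field_simps)
      next
        case False
        then have "srev k y \<notin> S" using srev_hcdom y by blast
        then show ?thesis using False unfolding T_def Zf_def J_def by simp
      qed
      have "(\<integral>\<^sup>+y. ennreal (T y x) \<partial>L) = (\<integral>\<^sup>+y. ennreal c * ennreal (J (srev k y)) \<partial>L)"
        by (rule nn_integral_cong) (simp add: T_eq ennreal_mult[OF c_nn J_nn])
      also have "\<dots> = ennreal c * (\<integral>\<^sup>+y. ennreal (J (srev k y)) \<partial>L)"
        by (rule nn_integral_cmult) (use J_meas in measurable)
      also have "(\<integral>\<^sup>+y. ennreal (J (srev k y)) \<partial>L) = (\<integral>\<^sup>+y. ennreal (J y) \<partial>L)"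
        by (rule nn_integral_srev[where f = "\<lambda>y. ennreal (J y)"]) (use J_meas in measurable)
      also have "\<dots> = ennreal (\<integral>y. J y \<partial>L)"
        by (rule nn_integral_eq_integral) (use eigen(1)[OF sx] J_nn in \<open>auto simp: J_def\<close>)
      also have "(\<integral>y. J y \<partial>L) = lam0 * \<phi> (srev k x)" unfolding J_def by (rule eigen(2)[OF sx])
      also have "ennreal c * ennreal (lam0 * \<phi> (srev k x)) = ennreal (Zf x / Z) * indicator A x"
      proof -
        have "c * (lam0 * \<phi> (srev k x)) = Zf x / Z * indicator A x"
          unfolding c_def Zf_def using True lam_pos Z_pos by (simp add: field_simps)
        moreover have "0 \<le> lam0 * \<phi> (srev k x)" using lam_pos phi_pos'[OF sx] by simp
        moreover have "0 \<le> Zf x / Z" using Zf_nonneg[of x] Z_pos by simp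
        ultimately show ?thesis using c_nn
          by (simp add: ennreal_mult[symmetric] indicator_def)
      qed
      finally show ?thesis .
    qed
  qed
  also have "\<dots> = emeasure PI A"
    unfolding pi_eq by (rule emeasure_density[symmetric]) simp_all
  finally show "emeasure (PI \<bind> Qk) A = emeasure PI A" .
qed


lemma Pt_transfer:
  assumes sM: "sets M = sets L" and ne: "space M \<noteq> {}" and ae: "AE x in M. x \<in> S"
  shows "M \<bind> Pt = M \<bind> Qk"
proof (rule bind_transfer[OF sM ne Qk_meas sets_Pt U_sets])
  show "\<And>x. x \<in> U \<Longrightarrow> Pt x = Qk x" unfolding Qk_def by simp
  show "Pt x \<notin> space (subprob_algebra L)" if "x \<in> space L" "x \<notin> U" for x
  proof
    assume "Pt x \<in> space (subprob_algebra L)"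
    then have "subprob_space (Pt x)" by (simp add: space_subprob_algebra)
    then have "emeasure (Pt x) (space L) \<le> 1"
      using subprob_space.subprob_emeasure_le_1 by fastforce
    then show False using that unfolding U_def by simp
  qed
  show "AE x in M. x \<in> U" using ae by (rule AE_mp) (use S_U in \<open>auto intro!: AE_I2\<close>)
qed

lemma bind_pi_Pt: "PI \<bind> Pt = PI"
proof -
  have "PI \<bind> Pt = PI \<bind> Qk"
    by (rule Pt_transfer[OF sets_pi _ pi_AE]) (simp add: space_pi space_L_ne)
  then show ?thesis using bind_pi_Qk by simp
qed

lemma kp_eq: assumes z: "z \<in> S" shows "kernel_pow L Pt n z = kernel_pow L Qk n z"
proof (induction n)
  case 0 then show ?case by simp
next
  case (Suc n)
  interpret D: doeblin L S Qk nu eps by (rule doeblin_inst)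
  have zL: "z \<in> space L" using S_space[OF z] .
  have P: "prob_space (kernel_pow L Qk n z)" and ae: "AE x in kernel_pow L Qk n z. x \<in> S"
    using D.K_props[OF z] by auto
  have "kernel_pow L Pt (Suc n) z = kernel_pow L Qk n z \<bind> Pt" using Suc by simp
  also have "\<dots> = kernel_pow L Qk n z \<bind> Qk"
    by (rule Pt_transfer[OF D.K_sets[OF zL] prob_space.not_empty[OF P] ae])
  finally show ?case by simp
qed

lemma main:
  "prob_space PI \<and> PI \<bind> Pt = PI \<and>
   (\<exists>q::real. 0 < q \<and> q < 1 \<and>
      (\<exists>C :: (nat \<Rightarrow> real) \<Rightarrow> real. \<forall>z\<in>S. \<forall>n::nat.
          tv_dist (kernel_pow L Pt n z) PI \<le> C z * q ^ n))"
proof (intro conjI)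
  show "prob_space PI" by (rule pi_prob)
  show "PI \<bind> Pt = PI" by (rule bind_pi_Pt)
  interpret D: doeblin L S Qk nu eps by (rule doeblin_inst)
  have "\<forall>z\<in>S. \<forall>n::nat. tv_dist (kernel_pow L Pt n z) PI \<le> 1 * (1 - eps) ^ n"
  proof (intro ballI allI)
    fix z n assume z: "z \<in> S"
    have zL: "z \<in> space L" using S_space[OF z] .
    have "tv_dist (kernel_pow L Qk n z) PI \<le> (1 - eps) ^ n"
      unfolding tv_dist_def
    proof (rule cSUP_least)
      show "sets (kernel_pow L Qk n z) \<noteq> {}" using sets.empty_sets by blast
      fix A assume "A \<in> sets (kernel_pow L Qk n z)"
      then have A: "A \<in> sets L" using D.K_sets[OF zL] by simp
      show "\<bar>measure (kernel_pow L Qk n z) A - measure PI A\<bar> \<le> (1 - eps) ^ n"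
        by (rule D.dist_bound[OF pi_prob sets_pi pi_AE bind_pi_Qk z A])
    qed
    then show "tv_dist (kernel_pow L Pt n z) PI \<le> 1 * (1 - eps) ^ n" using kp_eq[OF z] by simp
  qed
  then show "\<exists>q::real. 0 < q \<and> q < 1 \<and>
      (\<exists>C :: (nat \<Rightarrow> real) \<Rightarrow> real. \<forall>z\<in>S. \<forall>n::nat.
          tv_dist (kernel_pow L Pt n z) PI \<le> C z * q ^ n)"
    using eps by (intro exI[of _ "1 - eps"] conjI exI[of _ "\<lambda>_. 1"]) auto
qed

end

theorem lemma6p2:
  fixes v :: "real \<Rightarrow> ereal" and rhc R \<beta> p lam0 :: real and m :: nat
    and \<phi> :: "(nat \<Rightarrow> real) \<Rightarrow> real"
  assumes v_meas: "v \<in> borel_measurable borel"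
    and rhc_pos: "rhc > 0"
    and hard_core: "\<forall>r. 0 \<le> r \<and> r \<le> rhc \<longrightarrow> v r = \<infinity>"
    and finite_range: "\<forall>r. R \<le> r \<longrightarrow> v r = 0"
    and v_finite: "\<forall>r. rhc < r \<and> r \<le> R \<longrightarrow> \<bar>v r\<bar> \<noteq> \<infinity>"
    and v_bdd_below: "\<exists>c::real. \<forall>r. rhc < r \<and> r \<le> R \<longrightarrow> ereal c \<le> v r"
    and m_ge: "m \<ge> 2"
    and R_lt: "R < real (m + 1) * rhc"
    and beta_pos: "\<beta> > 0" and p_pos: "p > 0"
    \<comment> \<open>phi is a strictly positive normalised eigenfunction for lambda0 > 0\<close>
    and lam_pos: "lam0 > 0"
    and phi_meas: "\<phi> \<in> borel_measurable (Lmeas (m - 1))"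
    and phi_pos: "\<forall>z\<in>hcdom (m - 1) rhc. \<phi> z > 0"
    and phi_L2: "set_integrable (Lmeas (m - 1)) (hcdom (m - 1) rhc) (\<lambda>z. (\<phi> z)\<^sup>2)"
    and phi_norm: "(LINT z:hcdom (m - 1) rhc|Lmeas (m - 1). (\<phi> z)\<^sup>2) = 1"
    and phi_eigen: "\<forall>z\<in>hcdom (m - 1) rhc.
          set_integrable (Lmeas (m - 1)) (hcdom (m - 1) rhc) (\<lambda>z'. Kker v \<beta> p (m - 1) z z' * \<phi> z') \<and>
          (LINT z':hcdom (m - 1) rhc|Lmeas (m - 1). Kker v \<beta> p (m - 1) z z' * \<phi> z') = lam0 * \<phi> z"
    \<comment> \<open>lambda0 is the dominant eigenvalue\<close>
    and lam_dominant: "\<forall>\<mu>. is_eigenvalue_K v \<beta> p (m - 1) rhc \<mu> \<longrightarrow> cmod \<mu> \<le> lam0"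
  shows "prob_space (pi_meas (m - 1) rhc \<phi>)
    \<and> bind (pi_meas (m - 1) rhc \<phi>) (Ptrans v \<beta> p (m - 1) rhc lam0 \<phi>) = pi_meas (m - 1) rhc \<phi>
    \<and> (\<exists>q::real. 0 < q \<and> q < 1 \<and>
         (\<exists>C :: (nat \<Rightarrow> real) \<Rightarrow> real. \<forall>z\<in>hcdom (m - 1) rhc. \<forall>n::nat.
            tv_dist (kernel_pow (Lmeas (m - 1)) (Ptrans v \<beta> p (m - 1) rhc lam0 \<phi>) n z)
                    (pi_meas (m - 1) rhc \<phi>) \<le> C z * q ^ n))"
proof -
  interpret setting v rhc R \<beta> p lam0 "m - 1" \<phi>
  proof
    show "1 \<le> m - 1" using m_ge by simp
  qed (fact assms)+
  show ?thesis by (rule main)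
qed

end
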